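(* Let $n=2^bc$ with $c>1$ odd and $b>1$. Let $D_n=\langle s_1,t_1\mid s_1^2=t_1^{n/2}=1,\ s_1t_1s_1=t_1^{-1}\rangle$ and $D_{2n}=\langle s_2,t_2\mid s_2^2=t_2^n=1,\ s_2t_2s_2=t_2^{-1}\rangle$. Let $(u_i)_{i\in[1,m]}$ be a system of equations over $D_n$, each $u_i$ a word over constants $s_1,t_1,t_1^{-1}$ and variables $X_1^{\pm1},\dots,X_k^{\pm1}$. Let $w_i$ be obtained from $u_i$ by replacing $s_1\mapsto a$, $t_1^{\pm1}\mapsto d^{\pm2}$, each $X_j$ by $g_{0,j}(g_{1,j}dg_{1,j}^{-1})\cdots(g_{n/2,j}dg_{n/2,j}^{-1})$ and each $X_j^{-1}$ by the formal inverse of that word. Let $G_{4c}$ be the group with generators $a,d$ and $g_{i,j}$ ($i\in[0,n/2]$, $j\in[1,k]$) and relators $a^2$, $d^n$, $adad$, $[g,g']$, $[g,a]$, $g^2$, $[[\cdots[[d^c,g],g],\cdots],g]$ (with $b$ occurrences of $g$) for all $g,g'\in\{g_{i,j}\}$, and $w_i$ for $i\in[1,m]$. Then there is a surjective homomorphism $G_{4c}\to D_{2n}$ if and only if the system $(u_i)_{i\in[1,m]}$ has a solution in $D_n$.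
   Context: A solution of a system of equations over a group is an assignment of group elements $h_j$ to the variables $X_j$ (and $h_j^{-1}$ to $X_j^{-1}$) under which every equation evaluates to the identity. $[x,y]=xyx^{-1}y^{-1}$. *)

theory Defs
  imports "HOL-Algebra.Group"
begin

text \<open>A letter is a pair (x, e): e = False means the generator x, e = True means its inverse.\<close>
type_synonym 'a word = "('a \<times> bool) list"

definition winv :: "'a word \<Rightarrow> 'a word" where
  "winv w = rev (map (\<lambda>(x, e). (x, \<not> e)) w)"

definition wcomm :: "'a word \<Rightarrow> 'a word \<Rightarrow> 'a word" where
  "wcomm x y = x @ y @ winv x @ winv y"

fun itcomm :: "'a word \<Rightarrow> 'a word \<Rightarrow> nat \<Rightarrow> 'a word" where
  "itcomm w g 0 = w"
| "itcomm w g (Suc l) = wcomm (itcomm w g l) g"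

definition words :: "'a set \<Rightarrow> 'a word set" where
  "words X = lists (X \<times> UNIV)"

inductive pres_eq :: "'a set \<Rightarrow> 'a word set \<Rightarrow> 'a word \<Rightarrow> 'a word \<Rightarrow> bool"
  for X :: "'a set" and R :: "'a word set" where
  refl: "w \<in> words X \<Longrightarrow> pres_eq X R w w"
| sym: "pres_eq X R u v \<Longrightarrow> pres_eq X R v u"
| trans: "pres_eq X R u v \<Longrightarrow> pres_eq X R v w \<Longrightarrow> pres_eq X R u w"
| cancel: "u \<in> words X \<Longrightarrow> v \<in> words X \<Longrightarrow> x \<in> X \<Longrightarrow>
           pres_eq X R (u @ [(x, e), (x, \<not> e)] @ v) (u @ v)"
| relator: "u \<in> words X \<Longrightarrow> v \<in> words X \<Longrightarrow> r \<in> R \<Longrightarrow> r \<in> words X \<Longrightarrow>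
           pres_eq X R (u @ r @ v) (u @ v)"

definition wclass :: "'a set \<Rightarrow> 'a word set \<Rightarrow> 'a word \<Rightarrow> 'a word set" where
  "wclass X R w = {v. pres_eq X R w v}"

definition presented_group :: "'a set \<Rightarrow> 'a word set \<Rightarrow> 'a word set monoid" where
  "presented_group X R =
     \<lparr> carrier = wclass X R ` words X,
       mult = (\<lambda>A B. \<Union>u\<in>A. \<Union>v\<in>B. wclass X R (u @ v)),
       one = wclass X R [] \<rparr>"

datatype dgen = Sg | Tg

definition dihedral_pres :: "nat \<Rightarrow> dgen word set monoid" where
  "dihedral_pres N = presented_group {Sg, Tg}
     {[(Sg, False), (Sg, False)], replicate N (Tg, False),
      [(Sg, False), (Tg, False), (Sg, False), (Tg, False)]}"

definition dS :: "nat \<Rightarrow> dgen word set" where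
  "dS N = wclass {Sg, Tg} {[(Sg, False), (Sg, False)], replicate N (Tg, False),
      [(Sg, False), (Tg, False), (Sg, False), (Tg, False)]} [(Sg, False)]"

definition dT :: "nat \<Rightarrow> dgen word set" where
  "dT N = wclass {Sg, Tg} {[(Sg, False), (Sg, False)], replicate N (Tg, False),
      [(Sg, False), (Tg, False), (Sg, False), (Tg, False)]} [(Tg, False)]"

text \<open>Letters of an equation: constants s1, t1, t1^-1 and variables X_j, X_j^-1.\<close>
datatype ulet = CS | CT | CTi | XV nat | XVi nat

definition ulet_vars :: "ulet \<Rightarrow> nat set" where
  "ulet_vars l = (case l of XV j \<Rightarrow> {j} | XVi j \<Rightarrow> {j} | _ \<Rightarrow> {})"

definition eval_ulet :: "('g, 'b) monoid_scheme \<Rightarrow> 'g \<Rightarrow> 'g \<Rightarrow> (nat \<Rightarrow> 'g) \<Rightarrow> ulet \<Rightarrow> 'g" where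
  "eval_ulet G s t h l = (case l of CS \<Rightarrow> s | CT \<Rightarrow> t | CTi \<Rightarrow> inv\<^bsub>G\<^esub> t
      | XV j \<Rightarrow> h j | XVi j \<Rightarrow> inv\<^bsub>G\<^esub> (h j))"

definition eval_eq :: "('g, 'b) monoid_scheme \<Rightarrow> 'g \<Rightarrow> 'g \<Rightarrow> (nat \<Rightarrow> 'g) \<Rightarrow> ulet list \<Rightarrow> 'g" where
  "eval_eq G s t h u = foldr (\<lambda>l acc. eval_ulet G s t h l \<otimes>\<^bsub>G\<^esub> acc) u \<one>\<^bsub>G\<^esub>"

definition has_solution_Dn :: "nat \<Rightarrow> nat \<Rightarrow> ulet list list \<Rightarrow> bool" where
  "has_solution_Dn n k us =
     (\<exists>h. (\<forall>j\<in>{1..k}. h j \<in> carrier (dihedral_pres (n div 2))) \<and>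
          (\<forall>u\<in>set us. eval_eq (dihedral_pres (n div 2)) (dS (n div 2)) (dT (n div 2)) h u
                        = \<one>\<^bsub>dihedral_pres (n div 2)\<^esub>))"

datatype ggen = GA | GD | GG nat nat

definition gletter :: "ggen \<Rightarrow> ggen word" where
  "gletter x = [(x, False)]"

definition Xword :: "nat \<Rightarrow> nat \<Rightarrow> ggen word" where
  "Xword n j = gletter (GG 0 j) @
     concat (map (\<lambda>i. gletter (GG i j) @ gletter GD @ winv (gletter (GG i j))) [1..<n div 2 + 1])"

definition subst_let :: "nat \<Rightarrow> ulet \<Rightarrow> ggen word" where
  "subst_let n l = (case l of CS \<Rightarrow> gletter GA
      | CT \<Rightarrow> gletter GD @ gletter GD
      | CTi \<Rightarrow> winv (gletter GD @ gletter GD)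
      | XV j \<Rightarrow> Xword n j
      | XVi j \<Rightarrow> winv (Xword n j))"

definition subst_eq :: "nat \<Rightarrow> ulet list \<Rightarrow> ggen word" where
  "subst_eq n u = concat (map (subst_let n) u)"

definition Ggens :: "nat \<Rightarrow> nat \<Rightarrow> ggen set" where
  "Ggens n k = {GG i j | i j. i \<le> n div 2 \<and> j \<in> {1..k}}"

definition G4c_gens :: "nat \<Rightarrow> nat \<Rightarrow> ggen set" where
  "G4c_gens n k = {GA, GD} \<union> Ggens n k"

definition G4c_rels :: "nat \<Rightarrow> nat \<Rightarrow> nat \<Rightarrow> nat \<Rightarrow> ulet list list \<Rightarrow> ggen word set" where
  "G4c_rels n b c k us =
     {gletter GA @ gletter GA, replicate n (GD, False),
      gletter GA @ gletter GD @ gletter GA @ gletter GD}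
   \<union> {wcomm (gletter g) (gletter g') | g g'. g \<in> Ggens n k \<and> g' \<in> Ggens n k}
   \<union> {wcomm (gletter g) (gletter GA) | g. g \<in> Ggens n k}
   \<union> {gletter g @ gletter g | g. g \<in> Ggens n k}
   \<union> {itcomm (replicate c (GD, False)) (gletter g) b | g. g \<in> Ggens n k}
   \<union> subst_eq n ` set us"

definition G4c :: "nat \<Rightarrow> nat \<Rightarrow> nat \<Rightarrow> nat \<Rightarrow> ulet list list \<Rightarrow> ggen word set monoid" where
  "G4c n b c k us = presented_group (G4c_gens n k) (G4c_rels n b c k us)"

end

theory Submission
  imports Defs
begin

lemma words_Nil[simp]: "[] \<in> words X" by (simp add: words_def)
lemma words_Cons[simp]: "((x,e)#w) \<in> words X \<longleftrightarrow> x \<in> X \<and> w \<in> words X"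
  by (auto simp add: words_def)
lemma words_append[simp]: "u@v \<in> words X \<longleftrightarrow> u \<in> words X \<and> v \<in> words X"
  by (auto simp add: words_def)
lemma winv_Nil[simp]: "winv [] = []" by (simp add: winv_def)
lemma winv_Cons[simp]: "winv ((x,e)#w) = winv w @ [(x, \<not> e)]" by (simp add: winv_def)
lemma winv_append[simp]: "winv (u@v) = winv v @ winv u" by (simp add: winv_def)
lemma winv_winv[simp]: "winv (winv w) = w"
  by (induction w) auto
lemma winv_words[simp]: "winv w \<in> words X \<longleftrightarrow> w \<in> words X"
proof -
  have "w \<in> words X \<Longrightarrow> winv w \<in> words X" for w
    by (induction w) auto
  then show ?thesis by (metis winv_winv)
qed

lemma pres_eq_words: "pres_eq X R u v \<Longrightarrow> u \<in> words X \<and> v \<in> words X"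
  by (induction rule: pres_eq.induct) auto

lemma pres_eq_cong:
  "pres_eq X R u v \<Longrightarrow> x \<in> words X \<Longrightarrow> y \<in> words X \<Longrightarrow> pres_eq X R (x@u@y) (x@v@y)"
proof (induction rule: pres_eq.induct)
  case (refl w) then show ?case by (auto intro: pres_eq.refl)
next
  case (sym u v) then show ?case by (auto intro: pres_eq.sym)
next
  case (trans u v w) then show ?case by (meson pres_eq.trans)
next
  case (cancel u v a e)
  have "pres_eq X R ((x@u) @ [(a, e), (a, \<not> e)] @ (v@y)) ((x@u) @ (v@y))"
    using cancel by (intro pres_eq.cancel) auto
  then show ?case by simp
next
  case (relator u v r)
  have "pres_eq X R ((x@u) @ r @ (v@y)) ((x@u) @ (v@y))"
    using relator by (intro pres_eq.relator) auto
  then show ?case by simp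
qed

lemma pres_eq_app2:
  assumes "pres_eq X R u u'" "pres_eq X R v v'"
  shows "pres_eq X R (u@v) (u'@v')"
proof -
  have "pres_eq X R ([]@u@v) ([]@u'@v)"
    using assms pres_eq_words by (intro pres_eq_cong) auto
  moreover have "pres_eq X R (u'@v@[]) (u'@v'@[])"
    using assms pres_eq_words by (intro pres_eq_cong) auto
  ultimately show ?thesis by (auto intro: pres_eq.trans)
qed

lemma wclass_eq_iff:
  assumes "u \<in> words X"
  shows "wclass X R u = wclass X R v \<longleftrightarrow> pres_eq X R u v"
proof
  assume "wclass X R u = wclass X R v"
  moreover have "u \<in> wclass X R u" using assms by (simp add: wclass_def pres_eq.refl)
  ultimately show "pres_eq X R u v" by (auto simp: wclass_def intro: pres_eq.sym)
next
  assume "pres_eq X R u v"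
  then show "wclass X R u = wclass X R v"
    by (auto simp: wclass_def intro: pres_eq.sym pres_eq.trans)
qed

lemma wclass_self: "u \<in> words X \<Longrightarrow> u \<in> wclass X R u"
  by (simp add: wclass_def pres_eq.refl)

lemma pres_eq_winv: "w \<in> words X \<Longrightarrow> pres_eq X R (w @ winv w) []"
proof (induction w)
  case Nil then show ?case by (simp add: pres_eq.refl)
next
  case (Cons l w)
  obtain x e where l: "l = (x,e)" by force
  have x: "x \<in> X" "w \<in> words X" using Cons l by auto
  have "pres_eq X R ([(x,e)] @ (w @ winv w) @ [(x,\<not>e)]) ([(x,e)] @ [] @ [(x,\<not>e)])"
    using Cons x by (intro pres_eq_cong) auto
  moreover have "pres_eq X R ([] @ [(x,e),(x,\<not>e)] @ []) ([] @ [])"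
    using x by (intro pres_eq.cancel) auto
  ultimately show ?case using l by (auto intro: pres_eq.trans)
qed

lemma pres_eq_winv2: "w \<in> words X \<Longrightarrow> pres_eq X R (winv w @ w) []"
  using pres_eq_winv[of "winv w" X R] by simp

lemma pg_carrier[simp]: "carrier (presented_group X R) = wclass X R ` words X"
  by (simp add: presented_group_def)

lemma pg_one: "\<one>\<^bsub>presented_group X R\<^esub> = wclass X R []"
  by (simp add: presented_group_def)

lemma pg_mult:
  assumes "u \<in> words X" "v \<in> words X"
  shows "wclass X R u \<otimes>\<^bsub>presented_group X R\<^esub> wclass X R v = wclass X R (u@v)"
proof -
  have H: "\<And>u' v'. u' \<in> wclass X R u \<Longrightarrow> v' \<in> wclass X R v \<Longrightarrow> wclass X R (u'@v') = wclass X R (u@v)"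
  proof -
    fix u' v' assume "u' \<in> wclass X R u" "v' \<in> wclass X R v"
    then have "pres_eq X R (u@v) (u'@v')" by (auto simp: wclass_def intro: pres_eq_app2)
    moreover have "u@v \<in> words X" using assms by simp
    ultimately have "wclass X R (u@v) = wclass X R (u'@v')" by (simp only: wclass_eq_iff)
    then show "wclass X R (u'@v') = wclass X R (u@v)" by simp
  qed
  have uv: "u \<in> wclass X R u" "v \<in> wclass X R v" using assms by (auto intro: wclass_self)
  have "(\<Union>u'\<in>wclass X R u. \<Union>v'\<in>wclass X R v. wclass X R (u'@v')) =
     (\<Union>u'\<in>wclass X R u. \<Union>v'\<in>wclass X R v. wclass X R (u@v))"
    by (rule SUP_cong[OF HOL.refl], rule SUP_cong[OF HOL.refl]) (rule H)
  also have "\<dots> = wclass X R (u@v)" using uv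
    by (simp add: UN_constant) blast
  finally show ?thesis by (simp add: presented_group_def)
qed

lemma pg_group: "group (presented_group X R)"
proof (rule groupI)
  fix x y assume "x \<in> carrier (presented_group X R)" "y \<in> carrier (presented_group X R)"
  then obtain u v where "u \<in> words X" "v \<in> words X" "x = wclass X R u" "y = wclass X R v" by auto
  then show "x \<otimes>\<^bsub>presented_group X R\<^esub> y \<in> carrier (presented_group X R)"
    by (simp add: pg_mult)
next
  show "\<one>\<^bsub>presented_group X R\<^esub> \<in> carrier (presented_group X R)" by (simp add: pg_one)
next
  fix x y z assume "x \<in> carrier (presented_group X R)" "y \<in> carrier (presented_group X R)"
     "z \<in> carrier (presented_group X R)"
  then obtain u v w where "u \<in> words X" "v \<in> words X" "w \<in> words X"
     "x = wclass X R u" "y = wclass X R v" "z = wclass X R w" by auto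
  then show "x \<otimes>\<^bsub>presented_group X R\<^esub> y \<otimes>\<^bsub>presented_group X R\<^esub> z =
          x \<otimes>\<^bsub>presented_group X R\<^esub> (y \<otimes>\<^bsub>presented_group X R\<^esub> z)"
    by (simp add: pg_mult)
next
  fix x assume "x \<in> carrier (presented_group X R)"
  then obtain u where "u \<in> words X" "x = wclass X R u" by auto
  then show "\<one>\<^bsub>presented_group X R\<^esub> \<otimes>\<^bsub>presented_group X R\<^esub> x = x"
    using pg_mult[of "[]" X u R] by (simp add: pg_one)
next
  fix x assume "x \<in> carrier (presented_group X R)"
  then obtain u where u: "u \<in> words X" "x = wclass X R u" by auto
  have "wclass X R (winv u @ u) = wclass X R []"
    using u pres_eq_winv2[OF u(1)] wclass_eq_iff[of "winv u @ u" X R "[]"] by simp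
  then have "wclass X R (winv u) \<otimes>\<^bsub>presented_group X R\<^esub> x = \<one>\<^bsub>presented_group X R\<^esub>"
    using u by (simp add: pg_mult pg_one)
  moreover have "wclass X R (winv u) \<in> carrier (presented_group X R)" using u by simp
  ultimately show "\<exists>y\<in>carrier (presented_group X R). y \<otimes>\<^bsub>presented_group X R\<^esub> x = \<one>\<^bsub>presented_group X R\<^esub>"
    by blast
qed

lemma pg_inv:
  assumes "u \<in> words X"
  shows "inv\<^bsub>presented_group X R\<^esub> (wclass X R u) = wclass X R (winv u)"
proof -
  interpret group "presented_group X R" by (rule pg_group)
  have "wclass X R (winv u @ u) = wclass X R []"
    using assms pres_eq_winv2[OF assms] wclass_eq_iff[of "winv u @ u" X R "[]"] by simp
  then have "wclass X R (winv u) \<otimes>\<^bsub>presented_group X R\<^esub> wclass X R u = \<one>\<^bsub>presented_group X R\<^esub>"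
    using assms by (simp add: pg_mult pg_one)
  moreover have "wclass X R u \<in> carrier (presented_group X R)" "wclass X R (winv u) \<in> carrier (presented_group X R)"
    using assms by auto
  ultimately show ?thesis using inv_equality by blast
qed

lemma pg_relator:
  assumes "r \<in> R" "r \<in> words X"
  shows "wclass X R r = \<one>\<^bsub>presented_group X R\<^esub>"
proof -
  have "pres_eq X R ([] @ r @ []) ([] @ [])" using assms by (intro pres_eq.relator) auto
  then show ?thesis using assms wclass_eq_iff[of r X R "[]"] by (simp add: pg_one)
qed

definition evalw :: "('g,'b) monoid_scheme \<Rightarrow> ('a \<Rightarrow> 'g) \<Rightarrow> 'a word \<Rightarrow> 'g" where
  "evalw H \<phi> w = foldr (\<lambda>l acc. (if snd l then inv\<^bsub>H\<^esub> (\<phi> (fst l)) else \<phi> (fst l)) \<otimes>\<^bsub>H\<^esub> acc) w \<one>\<^bsub>H\<^esub>"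

lemma evalw_Nil[simp]: "evalw H \<phi> [] = \<one>\<^bsub>H\<^esub>" by (simp add: evalw_def)
lemma evalw_Cons[simp]: "evalw H \<phi> ((x,e)#w) = (if e then inv\<^bsub>H\<^esub> (\<phi> x) else \<phi> x) \<otimes>\<^bsub>H\<^esub> evalw H \<phi> w"
  by (simp add: evalw_def)

context group
begin

lemma evalw_closed: "\<phi> ` X \<subseteq> carrier G \<Longrightarrow> w \<in> words X \<Longrightarrow> evalw G \<phi> w \<in> carrier G"
proof (induction w)
  case Nil then show ?case by simp
next
  case (Cons l w) then show ?case by (cases l) auto
qed

lemma evalw_append: "\<phi> ` X \<subseteq> carrier G \<Longrightarrow> u \<in> words X \<Longrightarrow> v \<in> words X \<Longrightarrow>
   evalw G \<phi> (u@v) = evalw G \<phi> u \<otimes> evalw G \<phi> v"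
proof (induction u)
  case Nil then show ?case using evalw_closed[of \<phi> X v] by simp
next
  case (Cons l w) then show ?case using evalw_closed[OF Cons.prems(1)] by (cases l) (auto simp: m_assoc)
qed

lemma evalw_winv: "\<phi> ` X \<subseteq> carrier G \<Longrightarrow> w \<in> words X \<Longrightarrow> evalw G \<phi> (winv w) = inv (evalw G \<phi> w)"
proof (induction w)
  case Nil then show ?case by simp
next
  case (Cons l w)
  obtain x e where l: "l = (x,e)" by force
  have x: "\<phi> x \<in> carrier G" "w \<in> words X" using Cons l by auto
  show ?case using Cons l x
    by (auto simp: evalw_append evalw_closed inv_mult_group)
qed

lemma evalw_pres_eq:
  assumes phi: "\<phi> ` X \<subseteq> carrier G" and rel: "\<forall>r\<in>R. r \<in> words X \<longrightarrow> evalw G \<phi> r = \<one>"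
  shows "pres_eq X R u v \<Longrightarrow> evalw G \<phi> u = evalw G \<phi> v"
proof (induction rule: pres_eq.induct)
  case (refl w) then show ?case by simp
next
  case (sym u v) then show ?case by simp
next
  case (trans u v w) then show ?case by simp
next
  case (cancel u v x e)
  have "\<phi> x \<in> carrier G" using cancel phi by auto
  then show ?case using cancel phi evalw_closed[OF phi, of u] evalw_closed[OF phi, of v]
    by (cases e) (simp_all add: evalw_append m_assoc[symmetric])
next
  case (relator u v r)
  then show ?case using phi rel by (simp add: evalw_append evalw_closed)
qed

end

definition plift :: "('g,'b) monoid_scheme \<Rightarrow> ('a \<Rightarrow> 'g) \<Rightarrow> 'a word set \<Rightarrow> 'g" where
  "plift H \<phi> A = evalw H \<phi> (SOME w. w \<in> A)"

context group
begin

lemma plift_wclass: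
  assumes phi: "\<phi> ` X \<subseteq> carrier G" and rel: "\<forall>r\<in>R. r \<in> words X \<longrightarrow> evalw G \<phi> r = \<one>"
    and u: "u \<in> words X"
  shows "plift G \<phi> (wclass X R u) = evalw G \<phi> u"
proof -
  have "u \<in> wclass X R u" using u by (rule wclass_self)
  then have "(SOME w. w \<in> wclass X R u) \<in> wclass X R u" by (rule someI)
  then have "pres_eq X R u (SOME w. w \<in> wclass X R u)" by (simp add: wclass_def)
  then show ?thesis unfolding plift_def using evalw_pres_eq[OF phi rel] by simp
qed

lemma plift_hom:
  assumes phi: "\<phi> ` X \<subseteq> carrier G" and rel: "\<forall>r\<in>R. r \<in> words X \<longrightarrow> evalw G \<phi> r = \<one>"
  shows "plift G \<phi> \<in> hom (presented_group X R) G"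
proof (rule homI)
  fix x assume "x \<in> carrier (presented_group X R)"
  then obtain u where "u \<in> words X" "x = wclass X R u" by auto
  then show "plift G \<phi> x \<in> carrier G" using plift_wclass[OF phi rel] evalw_closed[OF phi] by simp
next
  fix x y assume "x \<in> carrier (presented_group X R)" "y \<in> carrier (presented_group X R)"
  then obtain u v where "u \<in> words X" "x = wclass X R u" "v \<in> words X" "y = wclass X R v" by auto
  then show "plift G \<phi> (x \<otimes>\<^bsub>presented_group X R\<^esub> y) = plift G \<phi> x \<otimes> plift G \<phi> y"
    using plift_wclass[OF phi rel] by (simp add: pg_mult evalw_append[OF phi])
qed

lemma hom_from_pg:
  assumes f: "f \<in> hom (presented_group X R) G"
  shows "w \<in> words X \<Longrightarrow> f (wclass X R w) = evalw G (\<lambda>x. f (wclass X R [(x,False)])) w"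
proof (induction w)
  case Nil
  have "f (\<one>\<^bsub>presented_group X R\<^esub>) = \<one>"
    using hom_one[OF f pg_group] group_axioms by simp
  then show ?case by (simp add: pg_one)
next
  case (Cons l w)
  obtain x e where l: "l = (x,e)" by force
  have x: "x \<in> X" "w \<in> words X" using Cons l by auto
  have gh: "group_hom (presented_group X R) G f"
    using f pg_group group_axioms by (auto simp: group_hom_def group_hom_axioms_def)
  have split: "wclass X R ((x,e)#w) = wclass X R [(x,e)] \<otimes>\<^bsub>presented_group X R\<^esub> wclass X R w"
    using x by (simp add: pg_mult)
  have letter: "f (wclass X R [(x,e)]) = (if e then inv (f (wclass X R [(x,False)])) else f (wclass X R [(x,False)]))"
  proof (cases e)
    case True
    have "wclass X R [(x,True)] = inv\<^bsub>presented_group X R\<^esub> (wclass X R [(x,False)])"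
      using x by (simp add: pg_inv)
    then show ?thesis using True x group_hom.hom_inv[OF gh] by simp
  qed simp
  show ?case using Cons l x split letter f
    by (simp add: hom_mult)
qed

lemma hom_from_pg_rel:
  assumes f: "f \<in> hom (presented_group X R) G" and r: "r \<in> R" "r \<in> words X"
  shows "evalw G (\<lambda>x. f (wclass X R [(x,False)])) r = \<one>"
proof -
  have "f (\<one>\<^bsub>presented_group X R\<^esub>) = \<one>"
    using hom_one[OF f pg_group] group_axioms by simp
  then show ?thesis using hom_from_pg[OF f r(2)] pg_relator[OF r] by simp
qed

lemma evalw_replicate: "\<phi> x \<in> carrier G \<Longrightarrow> evalw G \<phi> (replicate m (x,False)) = \<phi> x [^] m"
  by (induction m) (simp_all add: nat_pow_Suc2[symmetric] del: nat_pow_Suc)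

lemma evalw_wcomm: "\<phi> ` X \<subseteq> carrier G \<Longrightarrow> u \<in> words X \<Longrightarrow> v \<in> words X \<Longrightarrow>
   evalw G \<phi> (wcomm u v) = evalw G \<phi> u \<otimes> evalw G \<phi> v \<otimes> inv (evalw G \<phi> u) \<otimes> inv (evalw G \<phi> v)"
  by (simp add: wcomm_def evalw_append evalw_winv evalw_closed m_assoc)

end

definition dmul :: "int \<Rightarrow> bool \<times> int \<Rightarrow> bool \<times> int \<Rightarrow> bool \<times> int" where
  "dmul N x y = (fst x \<noteq> fst y, ((if fst y then - snd x else snd x) + snd y) mod N)"

definition DihC :: "int \<Rightarrow> (bool \<times> int) monoid" where
  "DihC N = \<lparr>carrier = {p. 0 \<le> snd p \<and> snd p < N}, mult = dmul N, one = (False, 0)\<rparr>"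

lemma DihC_carrier: "p \<in> carrier (DihC N) \<longleftrightarrow> 0 \<le> snd p \<and> snd p < N"
  by (simp add: DihC_def)
lemma DihC_carrier'[simp]: "(e,i) \<in> carrier (DihC N) \<longleftrightarrow> 0 \<le> i \<and> i < N"
  by (simp add: DihC_def)
lemma DihC_mult[simp]: "(e1,i1) \<otimes>\<^bsub>DihC N\<^esub> (e2,i2) = (e1 \<noteq> e2, ((if e2 then - i1 else i1) + i2) mod N)"
  by (simp add: DihC_def dmul_def)
lemma DihC_one[simp]: "\<one>\<^bsub>DihC N\<^esub> = (False, 0)"
  by (simp add: DihC_def)

lemma DihC_group: assumes "N > 0" shows "group (DihC N)"
proof (rule groupI)
  fix x y assume "x \<in> carrier (DihC N)" "y \<in> carrier (DihC N)"
  then show "x \<otimes>\<^bsub>DihC N\<^esub> y \<in> carrier (DihC N)" using assms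
    by (cases x, cases y) auto
next
  show "\<one>\<^bsub>DihC N\<^esub> \<in> carrier (DihC N)" using assms by simp
next
  fix x y z assume "x \<in> carrier (DihC N)" "y \<in> carrier (DihC N)" "z \<in> carrier (DihC N)"
  then show "x \<otimes>\<^bsub>DihC N\<^esub> y \<otimes>\<^bsub>DihC N\<^esub> z = x \<otimes>\<^bsub>DihC N\<^esub> (y \<otimes>\<^bsub>DihC N\<^esub> z)"
    apply (cases x, cases y, cases z)
    apply (auto simp: mod_simps)
           apply (simp_all add: algebra_simps mod_simps)
    done
next
  fix x assume "x \<in> carrier (DihC N)"
  then show "\<one>\<^bsub>DihC N\<^esub> \<otimes>\<^bsub>DihC N\<^esub> x = x"
    by (cases x) auto
next
  fix x assume x: "x \<in> carrier (DihC N)"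
  obtain e i where xe: "x = (e,i)" by force
  show "\<exists>y\<in>carrier (DihC N). y \<otimes>\<^bsub>DihC N\<^esub> x = \<one>\<^bsub>DihC N\<^esub>"
  proof (cases e)
    case True
    then show ?thesis using x xe by (intro bexI[of _ "(True,i)"]) auto
  next
    case False
    then show ?thesis using x xe assms by (intro bexI[of _ "(False,(-i) mod N)"]) (auto simp: mod_simps)
  qed
qed

lemma DihC_inv:
  assumes "N > 0" "(e,i) \<in> carrier (DihC N)"
  shows "inv\<^bsub>DihC N\<^esub> (e,i) = (if e then (e,i) else (False, (-i) mod N))"
proof -
  interpret group "DihC N" using assms(1) by (rule DihC_group)
  show ?thesis
  proof (cases e)
    case True
    then show ?thesis using assms by (intro inv_equality) auto
  next
    case False
    then show ?thesis using assms by (intro inv_equality) (auto simp: mod_simps)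
  qed
qed

lemma DihC_pow:
  assumes "N > 0" "0 \<le> i" "i < N"
  shows "(False,i) [^]\<^bsub>DihC N\<^esub> (m::nat) = (False, (int m * i) mod N)"
proof (induction m)
  case 0 then show ?case by simp
next
  case (Suc m) then show ?case by (simp add: mod_simps algebra_simps)
qed

definition DR :: "nat \<Rightarrow> dgen word set" where
  "DR N = {[(Sg, False), (Sg, False)], replicate N (Tg, False),
      [(Sg, False), (Tg, False), (Sg, False), (Tg, False)]}"

lemma dp_eq: "dihedral_pres N = presented_group {Sg,Tg} (DR N)"
  by (simp add: dihedral_pres_def DR_def)
lemma dS_eq: "dS N = wclass {Sg,Tg} (DR N) [(Sg,False)]"
  by (simp add: dS_def DR_def)
lemma dT_eq: "dT N = wclass {Sg,Tg} (DR N) [(Tg,False)]"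
  by (simp add: dT_def DR_def)

definition dphi :: "dgen \<Rightarrow> bool \<times> int" where
  "dphi x = (case x of Sg \<Rightarrow> (True,0) | Tg \<Rightarrow> (False,1))"

definition PhiD :: "nat \<Rightarrow> dgen word set \<Rightarrow> bool \<times> int" where
  "PhiD N = plift (DihC (int N)) dphi"

definition PsiD :: "nat \<Rightarrow> bool \<times> int \<Rightarrow> dgen word set" where
  "PsiD N p = (if fst p then dS N else \<one>\<^bsub>dihedral_pres N\<^esub>) \<otimes>\<^bsub>dihedral_pres N\<^esub>
      (dT N [^]\<^bsub>dihedral_pres N\<^esub> nat (snd p))"

lemma words_SgTg[simp]: "w \<in> words {Sg,Tg}"
proof -
  have "{Sg,Tg} = UNIV" using dgen.exhaust by blast
  then show ?thesis by (simp add: words_def)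
qed

lemma replicate_words[simp]: "x \<in> X \<Longrightarrow> replicate m (x,e) \<in> words X"
  by (induction m) auto

lemma pg_gen_pow: "x \<in> X \<Longrightarrow>
  wclass X R [(x,False)] [^]\<^bsub>presented_group X R\<^esub> (m::nat) = wclass X R (replicate m (x,False))"
proof (induction m)
  case 0 then show ?case by (simp add: pg_one)
next
  case (Suc m)
  have "replicate (Suc m) (x,False) = replicate m (x,False) @ [(x,False)]"
    by (simp add: replicate_append_same)
  moreover have "replicate m (x,False) \<in> words X" using Suc by (simp add: replicate_words)
  ultimately show ?case using Suc by (simp add: pg_mult)
qed

context
  fixes N :: nat assumes N2: "N \<ge> 2"
begin

lemma grpC: "group (DihC (int N))" using N2 by (intro DihC_group) simp
lemma grpP: "group (dihedral_pres N)" by (simp add: dp_eq pg_group)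

lemma dphi_carrier: "dphi ` {Sg,Tg} \<subseteq> carrier (DihC (int N))"
  using N2 by (auto simp: dphi_def)

lemma dphi_rel: "\<forall>r\<in>DR N. r \<in> words {Sg,Tg} \<longrightarrow> evalw (DihC (int N)) dphi r = \<one>\<^bsub>DihC (int N)\<^esub>"
proof -
  interpret C: group "DihC (int N)" by (rule grpC)
  have "evalw (DihC (int N)) dphi (replicate N (Tg, False)) = (False, 1) [^]\<^bsub>DihC (int N)\<^esub> N"
    using dphi_carrier by (subst C.evalw_replicate) (auto simp: dphi_def)
  also have "\<dots> = (False,0)" using N2 by (subst DihC_pow) auto
  moreover have "1 mod int N = 1" using N2 by simp
  ultimately show ?thesis by (auto simp: DR_def dphi_def)
qed

lemma PhiD_hom: "PhiD N \<in> hom (dihedral_pres N) (DihC (int N))"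
proof -
  interpret C: group "DihC (int N)" by (rule grpC)
  show ?thesis unfolding PhiD_def dp_eq using dphi_carrier dphi_rel by (rule C.plift_hom)
qed

lemma PhiD_wclass: "PhiD N (wclass {Sg,Tg} (DR N) w) = evalw (DihC (int N)) dphi w"
proof -
  interpret C: group "DihC (int N)" by (rule grpC)
  show ?thesis unfolding PhiD_def using dphi_carrier dphi_rel by (rule C.plift_wclass) simp
qed

lemma PhiD_S: "PhiD N (dS N) = (True,0)"
  by (simp add: dS_eq PhiD_wclass dphi_def)
lemma PhiD_T: "PhiD N (dT N) = (False,1)"
  using N2 by (simp add: dT_eq PhiD_wclass dphi_def)

lemma dS_carrier: "dS N \<in> carrier (dihedral_pres N)" by (simp add: dS_eq dp_eq)
lemma dT_carrier: "dT N \<in> carrier (dihedral_pres N)" by (simp add: dT_eq dp_eq)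

lemma SS: "dS N \<otimes>\<^bsub>dihedral_pres N\<^esub> dS N = \<one>\<^bsub>dihedral_pres N\<^esub>"
  unfolding dS_eq dp_eq by (simp add: pg_mult pg_relator DR_def)

lemma TN: "dT N [^]\<^bsub>dihedral_pres N\<^esub> N = \<one>\<^bsub>dihedral_pres N\<^esub>"
  unfolding dT_eq dp_eq by (simp add: pg_gen_pow pg_relator DR_def)

lemma STST: "dS N \<otimes>\<^bsub>dihedral_pres N\<^esub> dT N \<otimes>\<^bsub>dihedral_pres N\<^esub> dS N \<otimes>\<^bsub>dihedral_pres N\<^esub> dT N
   = \<one>\<^bsub>dihedral_pres N\<^esub>"
  unfolding dS_eq dT_eq dp_eq by (simp add: pg_mult pg_relator DR_def)

lemma Tmod: "dT N [^]\<^bsub>dihedral_pres N\<^esub> (m::nat) = dT N [^]\<^bsub>dihedral_pres N\<^esub> (m mod N)"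
proof -
  interpret P: group "dihedral_pres N" by (rule grpP)
  have "dT N [^]\<^bsub>dihedral_pres N\<^esub> m = dT N [^]\<^bsub>dihedral_pres N\<^esub> (N * (m div N) + m mod N)"
    by simp
  also have "\<dots> = (dT N [^]\<^bsub>dihedral_pres N\<^esub> N) [^]\<^bsub>dihedral_pres N\<^esub> (m div N) \<otimes>\<^bsub>dihedral_pres N\<^esub>
       dT N [^]\<^bsub>dihedral_pres N\<^esub> (m mod N)"
    using dT_carrier P.nat_pow_pow[of "dT N" N "m div N"] P.nat_pow_mult[of "dT N" "N * (m div N)" "m mod N"]
    by simp
  also have "\<dots> = dT N [^]\<^bsub>dihedral_pres N\<^esub> (m mod N)"
    using dT_carrier by (simp add: TN)
  finally show ?thesis .
qed

lemma PsiD_carrier: "PsiD N p \<in> carrier (dihedral_pres N)"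
proof -
  interpret P: group "dihedral_pres N" by (rule grpP)
  show ?thesis using dS_carrier dT_carrier by (simp add: PsiD_def)
qed

lemma PsiD_S: "p \<in> carrier (DihC (int N)) \<Longrightarrow>
  PsiD N ((True,0) \<otimes>\<^bsub>DihC (int N)\<^esub> p) = dS N \<otimes>\<^bsub>dihedral_pres N\<^esub> PsiD N p"
proof -
  interpret P: group "dihedral_pres N" by (rule grpP)
  assume p: "p \<in> carrier (DihC (int N))"
  obtain e i where pe: "p = (e,i)" by force
  have i: "0 \<le> i" "i < int N" using p pe by auto
  then have m: "i mod int N = i" by simp
  show ?thesis using pe m dS_carrier dT_carrier SS
    by (cases e) (simp_all add: PsiD_def P.m_assoc[symmetric])
qed

lemma TinvT: "inv\<^bsub>dihedral_pres N\<^esub> (dT N) = dT N [^]\<^bsub>dihedral_pres N\<^esub> (N - 1)"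
proof -
  interpret P: group "dihedral_pres N" by (rule grpP)
  have "dT N [^]\<^bsub>dihedral_pres N\<^esub> (N - 1) \<otimes>\<^bsub>dihedral_pres N\<^esub> dT N = dT N [^]\<^bsub>dihedral_pres N\<^esub> Suc (N - 1)"
    by simp
  also have "Suc (N - 1) = N" using N2 by simp
  finally have "dT N [^]\<^bsub>dihedral_pres N\<^esub> (N - 1) \<otimes>\<^bsub>dihedral_pres N\<^esub> dT N = \<one>\<^bsub>dihedral_pres N\<^esub>"
    using TN by simp
  then show ?thesis using dT_carrier by (metis P.inv_equality P.nat_pow_closed)
qed

lemma TS: "dT N \<otimes>\<^bsub>dihedral_pres N\<^esub> dS N = dS N \<otimes>\<^bsub>dihedral_pres N\<^esub> inv\<^bsub>dihedral_pres N\<^esub> (dT N)"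
proof -
  interpret P: group "dihedral_pres N" by (rule grpP)
  note c = dS_carrier dT_carrier
  have "dS N \<otimes>\<^bsub>dihedral_pres N\<^esub> (dT N \<otimes>\<^bsub>dihedral_pres N\<^esub> dS N \<otimes>\<^bsub>dihedral_pres N\<^esub> dT N) =
        dS N \<otimes>\<^bsub>dihedral_pres N\<^esub> dS N"
    using STST SS c by (simp add: P.m_assoc)
  then have tst: "dT N \<otimes>\<^bsub>dihedral_pres N\<^esub> dS N \<otimes>\<^bsub>dihedral_pres N\<^esub> dT N = dS N"
    using c by simp
  show ?thesis
    using P.inv_solve_right'[of "dT N \<otimes>\<^bsub>dihedral_pres N\<^esub> dS N" "dS N" "dT N"] tst c by simp
qed

lemma PsiD_T: "p \<in> carrier (DihC (int N)) \<Longrightarrow>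
  PsiD N ((False,1) \<otimes>\<^bsub>DihC (int N)\<^esub> p) = dT N \<otimes>\<^bsub>dihedral_pres N\<^esub> PsiD N p"
proof -
  interpret P: group "dihedral_pres N" by (rule grpP)
  note c = dS_carrier dT_carrier
  assume p: "p \<in> carrier (DihC (int N))"
  obtain e i where pe: "p = (e,i)" by force
  have i: "0 \<le> i" "i < int N" using p pe by auto
  show ?thesis
  proof (cases e)
    case False
    have "nat ((1 + i) mod int N) = (nat i + 1) mod N"
      using i by (simp add: nat_mod_distrib nat_add_distrib)
    then have "PsiD N ((False,1) \<otimes>\<^bsub>DihC (int N)\<^esub> p) = dT N [^]\<^bsub>dihedral_pres N\<^esub> ((nat i + 1) mod N)"
      using pe False c by (simp add: PsiD_def)
    also have "\<dots> = dT N [^]\<^bsub>dihedral_pres N\<^esub> (Suc (nat i))"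
      using Tmod[of "Suc (nat i)"] by simp
    also have "\<dots> = dT N \<otimes>\<^bsub>dihedral_pres N\<^esub> PsiD N p"
      using pe False c P.nat_pow_Suc2[of "dT N" "nat i"] by (simp add: PsiD_def del: P.nat_pow_Suc)
    finally show ?thesis .
  next
    case True
    have "nat ((- 1 + i) mod int N) = (nat i + (N - 1)) mod N"
    proof -
      have "(- 1 + i) mod int N = (i + int (N - 1)) mod int N"
      proof -
        have "i + int (N - 1) = (- 1 + i) + int N" using N2 by (simp add: of_nat_diff)
        then show ?thesis by (simp only: mod_add_self2)
      qed
      moreover have "nat (int N - 1) = N - 1" by simp
      ultimately show ?thesis using i N2 by (simp add: nat_mod_distrib nat_add_distrib)
    qed
    then have "PsiD N ((False,1) \<otimes>\<^bsub>DihC (int N)\<^esub> p) = dS N \<otimes>\<^bsub>dihedral_pres N\<^esub> dT N [^]\<^bsub>dihedral_pres N\<^esub> (nat i + (N - 1))"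
      using pe True c Tmod[of "nat i + (N - 1)"] by (simp add: PsiD_def)
    also have "\<dots> = dS N \<otimes>\<^bsub>dihedral_pres N\<^esub> (inv\<^bsub>dihedral_pres N\<^esub> (dT N) \<otimes>\<^bsub>dihedral_pres N\<^esub> dT N [^]\<^bsub>dihedral_pres N\<^esub> nat i)"
      using c by (simp add: TinvT P.nat_pow_mult add.commute)
    also have "\<dots> = dT N \<otimes>\<^bsub>dihedral_pres N\<^esub> PsiD N p"
      using pe True c by (simp add: PsiD_def TS P.m_assoc[symmetric])
    finally show ?thesis .
  qed
qed

end

lemma inv_transfer:
  assumes G: "group G" and H: "group H"
    and c: "c \<in> carrier G" and g: "g \<in> carrier H"
    and Pc: "\<And>q. q \<in> carrier G \<Longrightarrow> f q \<in> carrier H"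
    and eq: "\<And>q. q \<in> carrier G \<Longrightarrow> f (c \<otimes>\<^bsub>G\<^esub> q) = g \<otimes>\<^bsub>H\<^esub> f q"
    and p: "p \<in> carrier G"
  shows "f (inv\<^bsub>G\<^esub> c \<otimes>\<^bsub>G\<^esub> p) = inv\<^bsub>H\<^esub> g \<otimes>\<^bsub>H\<^esub> f p"
proof -
  interpret G: group G by (rule G)
  interpret H: group H by (rule H)
  have q: "inv\<^bsub>G\<^esub> c \<otimes>\<^bsub>G\<^esub> p \<in> carrier G" using c p by simp
  have "f (c \<otimes>\<^bsub>G\<^esub> (inv\<^bsub>G\<^esub> c \<otimes>\<^bsub>G\<^esub> p)) = f p" using c p by (simp add: G.m_assoc[symmetric])
  then have "f p = g \<otimes>\<^bsub>H\<^esub> f (inv\<^bsub>G\<^esub> c \<otimes>\<^bsub>G\<^esub> p)" using eq[OF q] by simp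
  then show ?thesis using g Pc[OF q] Pc[OF p] by (simp add: H.m_assoc[symmetric])
qed

context
  fixes N :: nat assumes N2: "N \<ge> 2"
begin

lemma PsiPhi_words: "PsiD N (evalw (DihC (int N)) dphi w) = wclass {Sg,Tg} (DR N) w"
proof (induction w)
  case Nil
  interpret P: group "dihedral_pres N" using N2 by (rule grpP)
  have "PsiD N (False,0) = \<one>\<^bsub>dihedral_pres N\<^esub>" using dT_carrier[OF N2] by (simp add: PsiD_def)
  moreover have "\<one>\<^bsub>dihedral_pres N\<^esub> = wclass {Sg, Tg} (DR N) []" by (simp add: dp_eq pg_one)
  ultimately show ?case by simp
next
  case (Cons l w)
  interpret P: group "dihedral_pres N" using N2 by (rule grpP)
  interpret C: group "DihC (int N)" using N2 by (rule grpC)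
  obtain x e where l: "l = (x,e)" by force
  have wc: "evalw (DihC (int N)) dphi w \<in> carrier (DihC (int N))"
    using C.evalw_closed[OF dphi_carrier[OF N2]] by simp
  have gen: "PsiD N (dphi x \<otimes>\<^bsub>DihC (int N)\<^esub> q) = wclass {Sg,Tg} (DR N) [(x,False)] \<otimes>\<^bsub>dihedral_pres N\<^esub> PsiD N q"
    if q: "q \<in> carrier (DihC (int N))" for q
    using PsiD_S[OF N2 q] PsiD_T[OF N2 q] by (cases x) (simp_all add: dphi_def dS_eq dT_eq)
  have dc: "dphi x \<in> carrier (DihC (int N))" using dphi_carrier[OF N2] by (cases x) auto
  have gc: "wclass {Sg,Tg} (DR N) [(x,False)] \<in> carrier (dihedral_pres N)" by (simp add: dp_eq)
  have split: "wclass {Sg,Tg} (DR N) ((x,e)#w) = wclass {Sg,Tg} (DR N) [(x,e)] \<otimes>\<^bsub>dihedral_pres N\<^esub> wclass {Sg,Tg} (DR N) w"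
    by (simp add: dp_eq pg_mult)
  show ?case
  proof (cases e)
    case False
    then show ?thesis using l Cons gen[OF wc] split by simp
  next
    case True
    have "wclass {Sg,Tg} (DR N) [(x,True)] = inv\<^bsub>dihedral_pres N\<^esub> wclass {Sg,Tg} (DR N) [(x,False)]"
      by (simp add: dp_eq pg_inv)
    moreover have "PsiD N (inv\<^bsub>DihC (int N)\<^esub> dphi x \<otimes>\<^bsub>DihC (int N)\<^esub> evalw (DihC (int N)) dphi w) =
        inv\<^bsub>dihedral_pres N\<^esub> wclass {Sg,Tg} (DR N) [(x,False)] \<otimes>\<^bsub>dihedral_pres N\<^esub> PsiD N (evalw (DihC (int N)) dphi w)"
      by (rule inv_transfer[where f="PsiD N", OF grpC[OF N2] grpP[OF N2] dc gc PsiD_carrier[OF N2] gen wc])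
    ultimately show ?thesis using l Cons True split by simp
  qed
qed

lemma PsiPhi: "x \<in> carrier (dihedral_pres N) \<Longrightarrow> PsiD N (PhiD N x) = x"
  using PsiPhi_words PhiD_wclass[OF N2] by (auto simp: dp_eq)

lemma PhiPsi: "p \<in> carrier (DihC (int N)) \<Longrightarrow> PhiD N (PsiD N p) = p"
proof -
  interpret P: group "dihedral_pres N" using N2 by (rule grpP)
  interpret C: group "DihC (int N)" using N2 by (rule grpC)
  assume p: "p \<in> carrier (DihC (int N))"
  obtain e i where pe: "p = (e,i)" by force
  have i: "0 \<le> i" "i < int N" using p pe by auto
  have h: "PhiD N \<in> hom (dihedral_pres N) (DihC (int N))" using PhiD_hom[OF N2] .
  have "PhiD N (dT N [^]\<^bsub>dihedral_pres N\<^esub> nat i) = (False,1) [^]\<^bsub>DihC (int N)\<^esub> nat i"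
    using hom_nat_pow[OF h dT_carrier[OF N2] grpP[OF N2] grpC[OF N2]] PhiD_T[OF N2] by simp
  also have "\<dots> = (False, i)" using N2 i by (subst DihC_pow) auto
  finally have T: "PhiD N (dT N [^]\<^bsub>dihedral_pres N\<^esub> nat i) = (False, i)" .
  have "PhiD N (PsiD N p) = PhiD N (if e then dS N else \<one>\<^bsub>dihedral_pres N\<^esub>) \<otimes>\<^bsub>DihC (int N)\<^esub> (False, i)"
    unfolding PsiD_def using pe hom_mult[OF h] dS_carrier[OF N2] dT_carrier[OF N2] T by simp
  also have "\<dots> = (e,i)"
    using hom_one[OF h grpP[OF N2] grpC[OF N2]] PhiD_S[OF N2] i by (cases e) simp_all
  finally show ?thesis using pe by simp
qed

lemma PsiD_hom: "PsiD N \<in> hom (DihC (int N)) (dihedral_pres N)"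
proof (rule homI)
  fix p assume "p \<in> carrier (DihC (int N))"
  then show "PsiD N p \<in> carrier (dihedral_pres N)" using PsiD_carrier[OF N2] by simp
next
  fix p q assume p: "p \<in> carrier (DihC (int N))" and q: "q \<in> carrier (DihC (int N))"
  interpret P: group "dihedral_pres N" using N2 by (rule grpP)
  interpret C: group "DihC (int N)" using N2 by (rule grpC)
  have h: "PhiD N \<in> hom (dihedral_pres N) (DihC (int N))" using PhiD_hom[OF N2] .
  have "p \<otimes>\<^bsub>DihC (int N)\<^esub> q = PhiD N (PsiD N p \<otimes>\<^bsub>dihedral_pres N\<^esub> PsiD N q)"
    using hom_mult[OF h PsiD_carrier[OF N2] PsiD_carrier[OF N2]] PhiPsi p q by simp
  then show "PsiD N (p \<otimes>\<^bsub>DihC (int N)\<^esub> q) = PsiD N p \<otimes>\<^bsub>dihedral_pres N\<^esub> PsiD N q"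
    using PsiPhi PsiD_carrier[OF N2] by simp
qed

lemma PsiD_S0: "PsiD N (True,0) = dS N"
  using PsiPhi[OF dS_carrier[OF N2]] PhiD_S[OF N2] by simp
lemma PsiD_T1: "PsiD N (False,1) = dT N"
  using PsiPhi[OF dT_carrier[OF N2]] PhiD_T[OF N2] by simp

lemma PsiD_image: "PsiD N ` carrier (DihC (int N)) = carrier (dihedral_pres N)"
proof
  show "PsiD N ` carrier (DihC (int N)) \<subseteq> carrier (dihedral_pres N)" using PsiD_carrier[OF N2] by auto
  show "carrier (dihedral_pres N) \<subseteq> PsiD N ` carrier (DihC (int N))"
  proof
    fix x assume x: "x \<in> carrier (dihedral_pres N)"
    then have "PhiD N x \<in> carrier (DihC (int N))" using hom_in_carrier[OF PhiD_hom[OF N2]] by simp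
    then show "x \<in> PsiD N ` carrier (DihC (int N))" using PsiPhi[OF x] by (metis imageI)
  qed
qed

end

lemma words_UNIV[simp]: "w \<in> words UNIV" by (simp add: words_def)

lemma eval_eq_Nil[simp]: "eval_eq G s t h [] = \<one>\<^bsub>G\<^esub>" by (simp add: eval_eq_def)
lemma eval_eq_Cons[simp]: "eval_eq G s t h (l#u) = eval_ulet G s t h l \<otimes>\<^bsub>G\<^esub> eval_eq G s t h u"
  by (simp add: eval_eq_def)

lemma subst_eq_Nil[simp]: "subst_eq n [] = []" by (simp add: subst_eq_def)
lemma subst_eq_Cons[simp]: "subst_eq n (l#u) = subst_let n l @ subst_eq n u" by (simp add: subst_eq_def)

lemma (in group) eval_ulet_closed:
  "s \<in> carrier G \<Longrightarrow> t \<in> carrier G \<Longrightarrow> (\<forall>j\<in>ulet_vars l. h j \<in> carrier G) \<Longrightarrow> eval_ulet G s t h l \<in> carrier G"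
  by (cases l) (auto simp: eval_ulet_def ulet_vars_def)

lemma (in group) eval_eq_closed:
  "s \<in> carrier G \<Longrightarrow> t \<in> carrier G \<Longrightarrow> (\<forall>l\<in>set u. \<forall>j\<in>ulet_vars l. h j \<in> carrier G) \<Longrightarrow> eval_eq G s t h u \<in> carrier G"
  by (induction u) (auto simp: eval_ulet_closed)

lemma eval_eq_hom:
  assumes G: "group G" and H: "group H" and f: "f \<in> hom G H"
    and s: "s \<in> carrier G" and t: "t \<in> carrier G"
    and hj: "\<forall>l\<in>set u. \<forall>j\<in>ulet_vars l. h j \<in> carrier G"
  shows "f (eval_eq G s t h u) = eval_eq H (f s) (f t) (\<lambda>j. f (h j)) u"
  using hj
proof (induction u)
  case Nil then show ?case using hom_one[OF f G H] by simp
next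
  case (Cons l u)
  interpret G: group G by (rule G)
  have gh: "group_hom G H f" using G H f by (auto simp: group_hom_def group_hom_axioms_def)
  have lv: "\<forall>j\<in>ulet_vars l. h j \<in> carrier G" using Cons by simp
  have "f (eval_ulet G s t h l) = eval_ulet H (f s) (f t) (\<lambda>j. f (h j)) l"
    using lv s t group_hom.hom_inv[OF gh] by (cases l) (auto simp: eval_ulet_def ulet_vars_def)
  then show ?case using Cons s t hom_mult[OF f] G.eval_ulet_closed[OF s t lv] G.eval_eq_closed[OF s t] by simp
qed

definition comm :: "('g,'b) monoid_scheme \<Rightarrow> 'g \<Rightarrow> 'g \<Rightarrow> 'g" where
  "comm G x y = x \<otimes>\<^bsub>G\<^esub> y \<otimes>\<^bsub>G\<^esub> inv\<^bsub>G\<^esub> x \<otimes>\<^bsub>G\<^esub> inv\<^bsub>G\<^esub> y"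

fun icv :: "('g,'b) monoid_scheme \<Rightarrow> 'g \<Rightarrow> 'g \<Rightarrow> nat \<Rightarrow> 'g" where
  "icv G x y 0 = x"
| "icv G x y (Suc l) = comm G (icv G x y l) y"

lemma (in group) itcomm_words: "w \<in> words X \<Longrightarrow> g \<in> words X \<Longrightarrow> itcomm w g l \<in> words X"
  by (induction l) (auto simp: wcomm_def)

lemma (in group) comm_closed: "x \<in> carrier G \<Longrightarrow> y \<in> carrier G \<Longrightarrow> comm G x y \<in> carrier G"
  by (simp add: comm_def)

lemma (in group) icv_closed: "x \<in> carrier G \<Longrightarrow> y \<in> carrier G \<Longrightarrow> icv G x y l \<in> carrier G"
  by (induction l) (auto simp: comm_closed)

lemma (in group) evalw_itcomm:
  assumes "\<phi> ` X \<subseteq> carrier G" "w \<in> words X" "g \<in> words X"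
  shows "evalw G \<phi> (itcomm w g l) = icv G (evalw G \<phi> w) (evalw G \<phi> g) l"
proof (induction l)
  case 0 then show ?case by simp
next
  case (Suc l)
  then show ?case using assms itcomm_words[of w X g l]
    by (simp add: evalw_wcomm comm_def)
qed

lemma (in group) icv_one: "x \<in> carrier G \<Longrightarrow> icv G x \<one> (Suc l) = \<one>"
proof (induction l)
  case 0 then show ?case by (simp add: comm_def)
next
  case (Suc l) then show ?case by (simp add: comm_def)
qed

definition iota :: "int \<Rightarrow> int \<Rightarrow> int \<Rightarrow> bool \<times> int \<Rightarrow> bool \<times> int" where
  "iota n \<alpha> \<delta> p = (fst p, ((if fst p then \<alpha> else 0) + 2 * snd p * \<delta>) mod n)"

lemma iota_hom:
  assumes "n = 2 * N1" "N1 > 0"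
  shows "iota n \<alpha> \<delta> \<in> hom (DihC N1) (DihC n)"
proof (rule homI)
  fix p assume "p \<in> carrier (DihC N1)"
  then show "iota n \<alpha> \<delta> p \<in> carrier (DihC n)" using assms by (simp add: iota_def DihC_carrier)
next
  fix p q assume "p \<in> carrier (DihC N1)" "q \<in> carrier (DihC N1)"
  obtain e1 m1 e2 m2 where pq: "p = (e1,m1)" "q = (e2,m2)" by force
  have key: "(a + 2 * (x mod N1) * \<delta>) mod n = (a + 2 * x * \<delta>) mod n" for x a
  proof -
    have "2 * (x mod N1) = (2 * x) mod n" using assms by (simp add: mod_mult_mult1)
    then have "(2 * (x mod N1) * \<delta>) mod n = (2 * x * \<delta>) mod n" by (metis mod_mult_left_eq)
    then show ?thesis by (metis mod_add_right_eq)
  qed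
  have key0: "(2 * (x mod N1) * \<delta>) mod n = (2 * x * \<delta>) mod n" for x
    using key[of 0] by simp
  show "iota n \<alpha> \<delta> (p \<otimes>\<^bsub>DihC N1\<^esub> q) = iota n \<alpha> \<delta> p \<otimes>\<^bsub>DihC n\<^esub> iota n \<alpha> \<delta> q"
    unfolding pq
    apply (cases e1; cases e2)
    apply (simp_all only: iota_def DihC_mult fst_conv snd_conv if_True if_False simp_thms key key0)
    apply (simp_all add: mod_simps)
    apply (simp_all add: algebra_simps)
    done
qed

lemma subst_eval:
  assumes G1: "group G1" and G2: "group G2" and hom: "\<iota> \<in> hom G1 G2"
    and rho: "\<rho> ` UNIV \<subseteq> carrier G2"
    and s: "s \<in> carrier G1" and t: "t \<in> carrier G1"
    and sA: "\<iota> s = \<rho> GA" and tD: "\<iota> t = \<rho> GD \<otimes>\<^bsub>G2\<^esub> \<rho> GD"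
    and hJ: "\<forall>j\<in>J. h j \<in> carrier G1 \<and> \<iota> (h j) = evalw G2 \<rho> (Xword n j)"
    and vars: "\<forall>l\<in>set u. ulet_vars l \<subseteq> J"
  shows "evalw G2 \<rho> (subst_eq n u) = \<iota> (eval_eq G1 s t h u)"
  using vars
proof (induction u)
  case Nil then show ?case using hom_one[OF hom G1 G2] by simp
next
  case (Cons l u)
  interpret G1: group G1 by (rule G1)
  interpret G2: group G2 by (rule G2)
  have gh: "group_hom G1 G2 \<iota>" using G1 G2 hom by (auto simp: group_hom_def group_hom_axioms_def)
  have lv: "\<forall>j\<in>ulet_vars l. h j \<in> carrier G1" using Cons hJ by auto
  have uv: "\<forall>l\<in>set u. \<forall>j\<in>ulet_vars l. h j \<in> carrier G1" using Cons hJ by fastforce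
  have rc: "\<rho> x \<in> carrier G2" for x using rho by auto
  have letter: "evalw G2 \<rho> (subst_let n l) = \<iota> (eval_ulet G1 s t h l)"
  proof (cases l)
    case CS then show ?thesis using sA rc by (simp add: subst_let_def eval_ulet_def gletter_def)
  next
    case CT then show ?thesis using tD rc by (simp add: subst_let_def eval_ulet_def gletter_def G2.m_assoc)
  next
    case CTi
    have "evalw G2 \<rho> (winv (gletter GD @ gletter GD)) = inv\<^bsub>G2\<^esub> (evalw G2 \<rho> (gletter GD @ gletter GD))"
      using rho by (intro G2.evalw_winv) auto
    then show ?thesis using CTi tD rc t group_hom.hom_inv[OF gh t]
      by (simp add: subst_let_def eval_ulet_def gletter_def G2.m_assoc)
  next
    case (XV j)
    then have "j \<in> J" using Cons by (simp add: ulet_vars_def)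
    then show ?thesis using XV hJ by (simp add: subst_let_def eval_ulet_def)
  next
    case (XVi j)
    then have j: "j \<in> J" using Cons by (simp add: ulet_vars_def)
    have "evalw G2 \<rho> (winv (Xword n j)) = inv\<^bsub>G2\<^esub> (evalw G2 \<rho> (Xword n j))"
      using rho by (intro G2.evalw_winv) auto
    then show ?thesis using XVi hJ j group_hom.hom_inv[OF gh] by (simp add: subst_let_def eval_ulet_def)
  qed
  have "evalw G2 \<rho> (subst_eq n (l#u)) = evalw G2 \<rho> (subst_let n l) \<otimes>\<^bsub>G2\<^esub> evalw G2 \<rho> (subst_eq n u)"
    using rho by (simp add: G2.evalw_append)
  also have "\<dots> = \<iota> (eval_ulet G1 s t h l) \<otimes>\<^bsub>G2\<^esub> \<iota> (eval_eq G1 s t h u)" using letter Cons by simp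
  also have "\<dots> = \<iota> (eval_eq G1 s t h (l#u))"
    using hom_mult[OF hom G1.eval_ulet_closed[OF s t lv] G1.eval_eq_closed[OF s t uv]] by simp
  finally show ?case .
qed

lemma (in group) evalw_in_subset:
  assumes "S \<subseteq> carrier G" "\<one> \<in> S" "\<forall>x\<in>S. \<forall>y\<in>S. x \<otimes> y \<in> S" "\<forall>x\<in>S. inv x \<in> S"
    and "\<phi> ` X \<subseteq> S"
  shows "w \<in> words X \<Longrightarrow> evalw G \<phi> w \<in> S"
proof (induction w)
  case Nil then show ?case using assms by simp
next
  case (Cons l w)
  obtain x e where l: "l = (x,e)" by force
  then have "x \<in> X" "w \<in> words X" using Cons by auto
  then have px: "\<phi> x \<in> S" and ew: "evalw G \<phi> w \<in> S" using Cons assms(5) by auto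
  have "(if e then inv (\<phi> x) else \<phi> x) \<in> S" using px assms(4) by simp
  then show ?case using l ew assms(3) by simp
qed

definition Ssub :: "int \<Rightarrow> int \<Rightarrow> int \<Rightarrow> (bool \<times> int) set" where
  "Ssub N p \<alpha> = {q. 0 \<le> snd q \<and> snd q < N \<and> snd q mod p = (if fst q then \<alpha> mod p else 0)}"

lemma Ssub_closed:
  assumes "N > 0" "p dvd N"
  shows "Ssub N p \<alpha> \<subseteq> carrier (DihC N)" "(False,0) \<in> Ssub N p \<alpha>"
    "\<forall>x\<in>Ssub N p \<alpha>. \<forall>y\<in>Ssub N p \<alpha>. x \<otimes>\<^bsub>DihC N\<^esub> y \<in> Ssub N p \<alpha>"
    "\<forall>x\<in>Ssub N p \<alpha>. inv\<^bsub>DihC N\<^esub> x \<in> Ssub N p \<alpha>"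
proof -
  show "Ssub N p \<alpha> \<subseteq> carrier (DihC N)" by (auto simp: Ssub_def DihC_carrier)
  show "(False,0) \<in> Ssub N p \<alpha>" using assms by (simp add: Ssub_def)
  show "\<forall>x\<in>Ssub N p \<alpha>. \<forall>y\<in>Ssub N p \<alpha>. x \<otimes>\<^bsub>DihC N\<^esub> y \<in> Ssub N p \<alpha>"
  proof (intro ballI)
    fix x y assume x: "x \<in> Ssub N p \<alpha>" and y: "y \<in> Ssub N p \<alpha>"
    obtain e1 i1 e2 i2 where xy: "x = (e1,i1)" "y = (e2,i2)" by force
    have m1: "i1 mod p = (if e1 then \<alpha> mod p else 0)" and m2: "i2 mod p = (if e2 then \<alpha> mod p else 0)"
      using x y xy by (auto simp: Ssub_def)
    have r: "(z mod N) mod p = z mod p" for z using assms(2) by (simp add: mod_mod_cancel)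
    have "((if e2 then - i1 else i1) + i2) mod p = (if e1 \<noteq> e2 then \<alpha> mod p else 0)"
    proof -
      have "((if e2 then - i1 else i1) + i2) mod p = ((if e2 then - (i1 mod p) else i1 mod p) + i2 mod p) mod p"
        by (cases e2) (simp_all add: mod_simps)
      also have "\<dots> = (if e1 \<noteq> e2 then \<alpha> mod p else 0)"
        unfolding m1 m2 by (cases e1; cases e2) (simp_all add: mod_simps)
      finally show ?thesis .
    qed
    then show "x \<otimes>\<^bsub>DihC N\<^esub> y \<in> Ssub N p \<alpha>" using xy assms r by (simp add: Ssub_def)
  qed
  show "\<forall>x\<in>Ssub N p \<alpha>. inv\<^bsub>DihC N\<^esub> x \<in> Ssub N p \<alpha>"
  proof
    fix x assume x: "x \<in> Ssub N p \<alpha>"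
    obtain e i where xe: "x = (e,i)" by force
    have xc: "(e,i) \<in> carrier (DihC N)" using x xe by (auto simp: Ssub_def)
    have m: "i mod p = (if e then \<alpha> mod p else 0)" using x xe by (auto simp: Ssub_def)
    have r: "(z mod N) mod p = z mod p" for z using assms(2) by (simp add: mod_mod_cancel)
    show "inv\<^bsub>DihC N\<^esub> x \<in> Ssub N p \<alpha>"
    proof (cases e)
      case True then show ?thesis using x xe DihC_inv[OF assms(1) xc] by simp
    next
      case False
      have "i mod p = 0" using m False by simp
      then have "(- i) mod p = 0" by (simp add: mod_minus_eq[of i p, symmetric])
      then show ?thesis using x xe DihC_inv[OF assms(1) xc] False r assms by (simp add: Ssub_def)
    qed
  qed
qed

lemma dvd_small_eq: "(N::int) dvd y - x \<Longrightarrow> 0 \<le> x \<Longrightarrow> x < N \<Longrightarrow> 0 \<le> y \<Longrightarrow> y < N \<Longrightarrow> x = y"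
  by (smt (verit, ccfv_threshold) dvd_imp_le_int)

lemma odd_dvd_pow2: "odd (c::nat) \<Longrightarrow> int c dvd 2^b * (i::int) \<Longrightarrow> int c dvd i"
proof -
  assume "odd c" "int c dvd 2^b * i"
  moreover have "coprime (int c) 2" using \<open>odd c\<close> by simp
  then have "coprime (int c) (2^b)" by simp
  ultimately show ?thesis by (simp add: coprime_dvd_mult_right_iff)
qed

lemma comm_rr:
  assumes "N > 0" "0 \<le> x" "x < N" "0 \<le> y" "y < N"
  shows "comm (DihC N) (True,x) (True,y) = (False, (2 * (y - x)) mod N)"
  using assms by (simp add: comm_def DihC_inv mod_simps algebra_simps)

lemma comm_fr:
  assumes "N > 0" "0 \<le> z" "z < N" "0 \<le> y" "y < N"
  shows "comm (DihC N) (False,z) (True,y) = (False, (2 * z) mod N)"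
proof -
  have c: "(False, (- z) mod N) \<in> carrier (DihC N)" using assms by simp
  show ?thesis using assms by (simp add: comm_def DihC_inv mod_simps algebra_simps)
qed

lemma icv_Suc': "icv G x y (Suc l) = icv G (comm G x y) y l"
  by (induction l) auto

lemma icv_fr:
  assumes "N > 0" "0 \<le> z" "z < N" "0 \<le> y" "y < N"
  shows "icv (DihC N) (False,z) (True,y) l = (False, (2^l * z) mod N)"
proof (induction l)
  case 0 then show ?case using assms by simp
next
  case (Suc l)
  have "comm (DihC N) (False, (2^l * z) mod N) (True,y) = (False, (2 * ((2^l * z) mod N)) mod N)"
    using assms by (intro comm_fr) auto
  then show ?case using Suc by (simp add: mod_simps mult.assoc)
qed

lemma icv_rr:
  assumes "N > 0" "0 \<le> x" "x < N" "0 \<le> y" "y < N"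
  shows "icv (DihC N) (True,x) (True,y) (Suc l) = (False, (2^(Suc l) * (y - x)) mod N)"
proof -
  have "icv (DihC N) (True,x) (True,y) (Suc l) = icv (DihC N) (False, (2 * (y - x)) mod N) (True,y) l"
    using assms by (subst icv_Suc') (simp add: comm_rr del: icv.simps)
  also have "\<dots> = (False, (2^l * ((2 * (y - x)) mod N)) mod N)"
    using assms by (intro icv_fr) auto
  also have "\<dots> = (False, (2^(Suc l) * (y - x)) mod N)" by (simp add: mod_simps algebra_simps)
  finally show ?thesis .
qed

lemma refl_pow:
  assumes "N > 0" "0 \<le> x" "x < N"
  shows "(True,x) [^]\<^bsub>DihC N\<^esub> (m::nat) = (if even m then (False,0) else (True,x))"
proof (induction m)
  case 0 then show ?case by simp
next
  case (Suc m) then show ?case using assms by auto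
qed

lemma small_dvd:
  assumes oc: "odd c" and d: "int c dvd 2^m * (y - x)"
    and x: "0 \<le> x" "x < int c" and y: "0 \<le> y" "y < int c"
  shows "x = y"
proof -
  have "int c dvd y - x" using d by (rule odd_dvd_pow2[OF oc])
  show "x = y" by (rule dvd_small_eq[of "int c"]) (use \<open>int c dvd y - x\<close> x y in auto)
qed

lemma rot_sq:
  assumes oc: "odd c" and i: "0 \<le> i" "i < int c" and m: "(i + i) mod int c = 0"
  shows "i = 0"
proof -
  have "int c dvd i + i" using m by (simp only: mod_eq_0_iff_dvd)
  moreover have "i + i = 2^1 * (i - 0)" by simp
  ultimately have "int c dvd 2^1 * (i - 0)" by metis
  then have "0 = i" by (rule small_dvd[OF oc]) (use i in auto)
  then show "i = 0" by simp
qed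

lemma Lc:
  fixes c b :: nat and a d :: "bool \<times> int" and Gs :: "(bool \<times> int) set"
  defines "C \<equiv> DihC (int c)"
  assumes oc: "odd c" and c1: "c > 1" and b1: "b \<ge> 1"
    and ac: "a \<in> carrier C" and dc: "d \<in> carrier C" and Gc: "Gs \<subseteq> carrier C"
    and H1: "a \<otimes>\<^bsub>C\<^esub> a = (False,0)"
    and H2: "a \<otimes>\<^bsub>C\<^esub> d \<otimes>\<^bsub>C\<^esub> a \<otimes>\<^bsub>C\<^esub> d = (False,0)"
    and H3: "\<forall>g\<in>Gs. g \<otimes>\<^bsub>C\<^esub> g = (False,0)"
    and H4: "\<forall>g\<in>Gs. g \<otimes>\<^bsub>C\<^esub> a = a \<otimes>\<^bsub>C\<^esub> g"
    and H5: "\<forall>g\<in>Gs. \<forall>g'\<in>Gs. g \<otimes>\<^bsub>C\<^esub> g' = g' \<otimes>\<^bsub>C\<^esub> g"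
    and H6: "\<forall>g\<in>Gs. icv C (d [^]\<^bsub>C\<^esub> c) g b = (False,0)"
    and Hgen: "\<And>S. S \<subseteq> carrier C \<Longrightarrow> (False,0) \<in> S \<Longrightarrow> (\<forall>x\<in>S. \<forall>y\<in>S. x \<otimes>\<^bsub>C\<^esub> y \<in> S) \<Longrightarrow>
       (\<forall>x\<in>S. inv\<^bsub>C\<^esub> x \<in> S) \<Longrightarrow> a \<in> S \<Longrightarrow> d \<in> S \<Longrightarrow> Gs \<subseteq> S \<Longrightarrow> carrier C \<subseteq> S"
  shows "fst a \<and> \<not> fst d \<and> coprime (snd d) (int c)"
proof -
  have c0: "int c > 0" using c1 by simp
  interpret G: group C unfolding C_def using c0 by (rule DihC_group)
  have one_c: "(False,1) \<in> carrier C" using c1 by (simp add: C_def)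
  have i1: "inv\<^bsub>C\<^esub> (False,0) = (False,0)" using G.inv_one by (simp add: C_def)
  have l1: "(False,0) \<otimes>\<^bsub>C\<^esub> y = y" "y \<otimes>\<^bsub>C\<^esub> (False,0) = y" if "y \<in> carrier C" for y
    using that by (cases y, simp add: C_def)+
  have sq: "x = (False,0) \<or> fst x" if x: "x \<in> carrier C" "x \<otimes>\<^bsub>C\<^esub> x = (False,0)" for x
  proof (cases "fst x")
    case False
    obtain i where xi: "x = (False,i)" using False by (cases x) auto
    have i: "0 \<le> i" "i < int c" using x xi by (auto simp: C_def)
    have "(i + i) mod int c = 0" using x xi by (simp add: C_def)
    then have "i = 0" by (rule rot_sq[OF oc i])
    then show ?thesis using xi by simp
  qed simp
  have rc: "x = y" if "(True,x) \<in> carrier C" "(True,y) \<in> carrier C"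
      "(True,x) \<otimes>\<^bsub>C\<^esub> (True,y) = (True,y) \<otimes>\<^bsub>C\<^esub> (True,x)" for x y
  proof -
    have "(- x + y) mod int c = (- y + x) mod int c" using that by (simp add: C_def)
    then have "int c dvd (- x + y) - (- y + x)" by (simp add: mod_eq_dvd_iff)
    moreover have "(- x + y) - (- y + x) = 2^1 * (y - x)" by simp
    ultimately have "int c dvd 2^1 * (y - x)" by metis
    then show "x = y" by (rule small_dvd[OF oc]) (use that in \<open>auto simp: C_def\<close>)
  qed
  have inv_self: "inv\<^bsub>C\<^esub> x = x" if "x \<in> carrier C" "x \<otimes>\<^bsub>C\<^esub> x = (False,0)" for x
    using that by (intro G.inv_equality) (auto simp: C_def)
  have nd: "\<not> fst d"
  proof
    assume fd: "fst d"
    obtain x where dx: "d = (True,x)" using fd by (cases d) auto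
    have x: "0 \<le> x" "x < int c" using dc dx by (auto simp: C_def)
    have dd: "d \<otimes>\<^bsub>C\<^esub> d = (False,0)" using dx x by (simp add: C_def)
    have refl_eq: "y = x" if y: "0 \<le> y" "y < int c" "int c dvd 2^m * (x - y)" for y m
      by (rule small_dvd[OF oc y(3)]) (use x y in auto)
    have a01: "a \<in> {(False,0), d}"
    proof (cases "fst a")
      case True
      obtain xa where ax: "a = (True,xa)" using True by (cases a) auto
      have xa: "0 \<le> xa" "xa < int c" using ac ax by (auto simp: C_def)
      have "a \<otimes>\<^bsub>C\<^esub> d \<otimes>\<^bsub>C\<^esub> a \<otimes>\<^bsub>C\<^esub> d = comm C a d"
        unfolding comm_def using ax dx xa x by (simp add: C_def DihC_inv c0)
      also have "\<dots> = (False, (2 * (x - xa)) mod int c)"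
        unfolding C_def ax dx using comm_rr c0 x xa by simp
      finally have "(2 * (x - xa)) mod int c = 0" using H2 by simp
      then have "xa = x" using refl_eq[of xa 1] xa by (simp add: mod_eq_0_iff_dvd)
      then show ?thesis using ax dx by simp
    next
      case False
      then show ?thesis using sq[OF ac H1] by simp
    qed
    have g01: "g \<in> {(False,0), d}" if g: "g \<in> Gs" for g
    proof (cases "fst g")
      case True
      obtain y where gy: "g = (True,y)" using True by (cases g) auto
      have y: "0 \<le> y" "y < int c" using Gc g gy by (auto simp: C_def)
      have "d [^]\<^bsub>C\<^esub> c = d" unfolding C_def dx using refl_pow[OF c0 x] oc by simp
      then have "icv C d g b = (False,0)" using H6 g by simp
      moreover obtain b' where b': "b = Suc b'" using b1 by (cases b) auto
      ultimately have "(2^b * (y - x)) mod int c = 0"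
        unfolding C_def dx gy using icv_rr[OF c0 x y, of b'] by simp
      then have "int c dvd 2^b * (y - x)" by (simp only: mod_eq_0_iff_dvd)
      then have "x = y" by (rule small_dvd[OF oc]) (use x y in auto)
      then show ?thesis using gy dx by simp
    next
      case False
      then show ?thesis using sq[of g] Gc g H3 by auto
    qed
    let ?S = "{(False,0), d}"
    have "carrier C \<subseteq> ?S"
    proof (rule Hgen)
      show "?S \<subseteq> carrier C" using dc c0 by (simp add: C_def)
      show "\<forall>x\<in>?S. \<forall>y\<in>?S. x \<otimes>\<^bsub>C\<^esub> y \<in> ?S" using dd dx x by (auto simp: C_def)
      show "\<forall>x\<in>?S. inv\<^bsub>C\<^esub> x \<in> ?S" using inv_self dd dc i1 by auto
    qed (use a01 g01 in auto)
    then show False using one_c dx by auto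
  qed
  obtain \<delta> where d\<delta>: "d = (False,\<delta>)" using nd by (cases d) auto
  have \<delta>: "0 \<le> \<delta>" "\<delta> < int c" using dc d\<delta> by (auto simp: C_def)
  have fa: "fst a"
  proof (rule ccontr)
    assume "\<not> fst a"
    then have a1: "a = (False,0)" using sq[OF ac H1] by simp
    have "d \<otimes>\<^bsub>C\<^esub> d = (False,0)" using H2 a1 d\<delta> \<delta> by (simp add: C_def)
    then have d1: "d = (False,0)" using sq[OF dc] nd by simp
    have Gr: "g = (False,0) \<or> fst g" if "g \<in> Gs" for g using sq[of g] Gc H3 that by auto
    let ?S = "insert (False,0) Gs"
    have "carrier C \<subseteq> ?S"
    proof (rule Hgen)
      show "?S \<subseteq> carrier C" using Gc c0 by (simp add: C_def)
      show "\<forall>x\<in>?S. \<forall>y\<in>?S. x \<otimes>\<^bsub>C\<^esub> y \<in> ?S"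
      proof (intro ballI)
        fix x y assume x: "x \<in> ?S" and y: "y \<in> ?S"
        show "x \<otimes>\<^bsub>C\<^esub> y \<in> ?S"
        proof (cases "x = (False,0) \<or> y = (False,0)")
          case xy0: True
          have z0: "(False,0) \<in> carrier C" using c0 by (simp add: C_def)
          have xc: "x \<in> carrier C" "y \<in> carrier C" using x y Gc z0 by auto
          show ?thesis
          proof (cases "x = (False,0)")
            case True then show ?thesis using l1(1)[OF xc(2)] y by simp
          next
            case False then have "y = (False,0)" using xy0 by simp
            then show ?thesis using l1(2)[OF xc(1)] x by simp
          qed
        next
          case False
          then have xG: "x \<in> Gs" and yG: "y \<in> Gs" using x y by auto
          have "fst x" using Gr[OF xG] False by blast
          moreover have "fst y" using Gr[OF yG] False by blast
          ultimately
          obtain xx yy where xy: "x = (True,xx)" "y = (True,yy)" by (cases x, cases y) auto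
          have "xx = yy" using rc[of xx yy] xy xG yG Gc H5 by auto
          then show ?thesis using xy H3 xG by simp
        qed
      qed
      show "\<forall>x\<in>?S. inv\<^bsub>C\<^esub> x \<in> ?S" using inv_self H3 Gc i1 by auto
    qed (use a1 d1 in auto)
    then have "(False,1) \<in> Gs" using one_c by auto
    then show False using Gr by force
  qed
  obtain \<alpha> where a\<alpha>: "a = (True,\<alpha>)" using fa by (cases a) auto
  have \<alpha>: "0 \<le> \<alpha>" "\<alpha> < int c" using ac a\<alpha> by (auto simp: C_def)
  have cop: "coprime \<delta> (int c)"
  proof (rule ccontr)
    assume ncop: "\<not> coprime \<delta> (int c)"
    define p where "p = gcd \<delta> (int c)"
    have p1: "p > 1"
    proof -
      have "p \<noteq> 1" using ncop by (simp add: p_def coprime_iff_gcd_eq_1)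
      moreover have "p \<ge> 0" by (simp add: p_def)
      moreover have "p \<noteq> 0" using c0 by (simp add: p_def)
      ultimately show ?thesis by simp
    qed
    have pc: "p dvd int c" and pd: "p dvd \<delta>" by (simp_all add: p_def)
    note SC = Ssub_closed[OF c0 pc, of \<alpha>]
    have Gs_sub: "Gs \<subseteq> Ssub (int c) p \<alpha>"
    proof
      fix g assume g: "g \<in> Gs"
      show "g \<in> Ssub (int c) p \<alpha>"
      proof (cases "fst g")
        case True
        obtain y where gy: "g = (True,y)" using True by (cases g) auto
        have "y = \<alpha>" using rc[of y \<alpha>] gy a\<alpha> H4 g Gc ac by auto
        then show ?thesis using gy \<alpha> by (simp add: Ssub_def)
      next
        case False
        then have "g = (False,0)" using sq[of g] Gc g H3 by auto
        then show ?thesis using SC by simp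
      qed
    qed
    have "carrier C \<subseteq> Ssub (int c) p \<alpha>"
      by (rule Hgen) (use SC Gs_sub a\<alpha> \<alpha> d\<delta> \<delta> pd in \<open>auto simp: C_def Ssub_def\<close>)
    then have "1 mod p = 0" using one_c by (auto simp: Ssub_def)
    then show False using p1 by simp
  qed
  show ?thesis using fa nd d\<delta> cop by simp
qed

lemma inv_mod_exists:
  fixes \<delta> n :: int
  assumes "coprime \<delta> n"
  shows "\<exists>q. (\<delta> * q) mod n = 1 mod n"
proof -
  obtain u v where "u * \<delta> + v * n = gcd \<delta> n" using bezout_int by blast
  then have uv: "u * \<delta> + v * n = 1" using assms by simp
  have "(\<delta> * u) mod n = (u * \<delta> + v * n) mod n" by (simp add: mult.commute)
  then show ?thesis using uv by auto
qed

lemma iota_surj: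
  fixes n N1 \<alpha> \<delta> v :: int
  assumes n: "n = 2 * N1" "N1 > 0" and cop: "coprime \<delta> n"
    and v: "0 \<le> v" "v < n" and ev: "even (v - (if e then \<alpha> else 0))"
  shows "\<exists>m. 0 \<le> m \<and> m < N1 \<and> iota n \<alpha> \<delta> (e,m) = (e,v)"
proof -
  obtain q where q: "(\<delta> * q) mod n = 1 mod n" using inv_mod_exists[OF cop] by blast
  obtain w where w: "v - (if e then \<alpha> else 0) = 2 * w" using ev by (rule evenE)
  define m where "m = (q * w) mod N1"
  have m: "0 \<le> m" "m < N1" using n by (simp_all add: m_def)
  have "(2 * m * \<delta>) mod n = (2 * (q * w) * \<delta>) mod n"
  proof -
    have "2 * m = (2 * (q * w)) mod n" using n by (simp add: m_def mod_mult_mult1)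
    then show ?thesis by (metis mod_mult_left_eq)
  qed
  also have "\<dots> = ((2 * w) * (\<delta> * q)) mod n" by (simp add: algebra_simps)
  also have "\<dots> = ((2 * w) * ((\<delta> * q) mod n)) mod n" by (simp add: mod_mult_right_eq)
  also have "\<dots> = (2 * w) mod n" using q by (simp add: mod_mult_right_eq)
  finally have key: "(2 * m * \<delta>) mod n = (2 * w) mod n" .
  have "((if e then \<alpha> else 0) + 2 * m * \<delta>) mod n = ((if e then \<alpha> else 0) + (2 * m * \<delta>) mod n) mod n"
    by (simp add: mod_simps)
  also have "\<dots> = ((if e then \<alpha> else 0) + 2 * w) mod n" using key by (simp add: mod_simps)
  also have "\<dots> = v" using w v by simp
  finally show ?thesis using m by (intro exI[of _ m]) (simp add: iota_def)
qed

lemma iota_inj1: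
  fixes n N1 \<alpha> \<delta> m :: int
  assumes n: "n = 2 * N1" "N1 > 0" and cop: "coprime \<delta> n"
    and m: "0 \<le> m" "m < N1" and eq: "iota n \<alpha> \<delta> (e,m) = (False,0)"
  shows "e = False \<and> m = 0"
proof -
  have e: "e = False" using eq by (simp add: iota_def)
  then have "(2 * m * \<delta>) mod n = 0" using eq by (simp add: iota_def)
  then have "n dvd (2 * m) * \<delta>" by (simp add: mod_eq_0_iff_dvd)
  moreover have "coprime n \<delta>" using cop by (simp add: coprime_commute)
  ultimately have "n dvd 2 * m" by (simp add: coprime_dvd_mult_left_iff)
  then have "N1 dvd m" using n by simp
  then have "m = 0" using m by (smt (verit, ccfv_threshold) dvd_imp_le_int)
  then show ?thesis using e by simp
qed

lemma conj_rot:
  assumes N: "N > 0" and x: "x \<in> carrier (DihC N)" and d: "0 \<le> \<delta>" "\<delta> < N"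
  shows "x \<otimes>\<^bsub>DihC N\<^esub> (False,\<delta>) \<otimes>\<^bsub>DihC N\<^esub> inv\<^bsub>DihC N\<^esub> x \<in> {(False,\<delta>), (False, (-\<delta>) mod N)}"
proof -
  obtain e i where xe: "x = (e,i)" by force
  have i: "0 \<le> i" "i < N" using x xe by auto
  show ?thesis
  proof (cases e)
    case True then show ?thesis using xe i d N DihC_inv[OF N, of e i] by (simp add: mod_simps)
  next
    case False
    have "(False, (- i) mod N) \<in> carrier (DihC N)" using N by simp
    then show ?thesis using xe i d N False DihC_inv[OF N, of e i] by (simp add: mod_simps)
  qed
qed

lemma concat_blocks:
  assumes N: "N > 0" and d: "0 \<le> \<delta>" "\<delta> < N" and rho: "\<rho> ` UNIV \<subseteq> carrier (DihC N)"
    and blk: "\<forall>i\<in>set L. evalw (DihC N) \<rho> (B i) \<in> {(False,\<delta>), (False, (-\<delta>) mod N)}"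
  shows "\<exists>s. even (s - int (length L)) \<and> evalw (DihC N) \<rho> (concat (map B L)) = (False, (\<delta> * s) mod N)"
  using blk
proof (induction L)
  case Nil then show ?case by (intro exI[of _ 0]) simp
next
  case (Cons i L)
  interpret C: group "DihC N" using N by (rule DihC_group)
  obtain s where s: "even (s - int (length L))" "evalw (DihC N) \<rho> (concat (map B L)) = (False, (\<delta> * s) mod N)"
    using Cons by auto
  have e: "evalw (DihC N) \<rho> (concat (map B (i#L))) = evalw (DihC N) \<rho> (B i) \<otimes>\<^bsub>DihC N\<^esub> (False, (\<delta> * s) mod N)"
    using rho s by (simp add: C.evalw_append)
  have bi: "evalw (DihC N) \<rho> (B i) \<in> {(False,\<delta>), (False, (-\<delta>) mod N)}" using Cons by simp
  show ?case
  proof (cases "evalw (DihC N) \<rho> (B i) = (False,\<delta>)")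
    case True
    have "(\<delta> + (\<delta> * s) mod N) mod N = (\<delta> * (s + 1)) mod N" by (simp add: mod_simps algebra_simps)
    then show ?thesis using e True s by (intro exI[of _ "s + 1"]) auto
  next
    case False
    then have "evalw (DihC N) \<rho> (B i) = (False, (-\<delta>) mod N)" using bi by simp
    moreover have "((-\<delta>) mod N + (\<delta> * s) mod N) mod N = (\<delta> * (s - 1)) mod N" by (simp add: mod_simps algebra_simps)
    ultimately show ?thesis using e s by (intro exI[of _ "s - 1"]) auto
  qed
qed

lemma (in group) comm_one_imp:
  "x \<in> carrier G \<Longrightarrow> y \<in> carrier G \<Longrightarrow> x \<otimes> y \<otimes> inv x \<otimes> inv y = \<one> \<Longrightarrow> x \<otimes> y = y \<otimes> x"
  by (metis inv_solve_right' l_one m_closed inv_closed)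

lemma icv_hom:
  assumes G: "group G" and H: "group H" and f: "f \<in> hom G H" and x: "x \<in> carrier G" and y: "y \<in> carrier G"
  shows "f (icv G x y l) = icv H (f x) (f y) l"
proof (induction l)
  case 0 then show ?case by simp
next
  case (Suc l)
  interpret G: group G by (rule G)
  have gh: "group_hom G H f" using G H f by (auto simp: group_hom_def group_hom_axioms_def)
  have c: "icv G x y l \<in> carrier G" using x y by (rule G.icv_closed)
  show ?case using Suc c y x by (simp add: comm_def hom_mult[OF f] group_hom.hom_inv[OF gh])
qed

lemma evalw_cong: "(\<forall>x\<in>X. \<phi> x = \<psi> x) \<Longrightarrow> w \<in> words X \<Longrightarrow> evalw G \<phi> w = evalw G \<psi> w"
proof (induction w)
  case Nil then show ?case by simp
next
  case (Cons l w) then show ?case by (cases l) auto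
qed

lemma (in group) evalw_gletter: "\<phi> x \<in> carrier G \<Longrightarrow> evalw G \<phi> (gletter x) = \<phi> x"
  by (simp add: gletter_def)

lemma words_concat: "(\<forall>x\<in>set L. x \<in> words X) \<Longrightarrow> concat L \<in> words X"
  by (induction L) auto

definition proj :: "int \<Rightarrow> bool \<times> int \<Rightarrow> bool \<times> int" where
  "proj c p = (fst p, snd p mod c)"

lemma proj_hom:
  assumes "N > 0" "c > 0" "c dvd N"
  shows "proj c \<in> hom (DihC N) (DihC c)"
proof (rule homI)
  fix p assume "p \<in> carrier (DihC N)"
  then show "proj c p \<in> carrier (DihC c)" using assms by (simp add: proj_def DihC_carrier)
next
  fix p q assume "p \<in> carrier (DihC N)" "q \<in> carrier (DihC N)"
  obtain e1 i1 e2 i2 where pq: "p = (e1,i1)" "q = (e2,i2)" by force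
  have r: "(z mod N) mod c = z mod c" for z using assms(3) by (simp add: mod_mod_cancel)
  show "proj c (p \<otimes>\<^bsub>DihC N\<^esub> q) = proj c p \<otimes>\<^bsub>DihC c\<^esub> proj c q"
    using pq r by (cases e2) (simp_all add: proj_def mod_simps)
qed

locale G4setup =
  fixes n b c k :: nat and us :: "ulet list list"
  assumes nbc: "n = 2 ^ b * c" and oc: "odd c" and c1: "c > 1" and b1: "b > 1"
    and vars: "\<forall>u\<in>set us. \<forall>l\<in>set u. ulet_vars l \<subseteq> {1..k}"

context G4setup
begin

lemma n_even: "n = 2 * (n div 2)"
proof -
  have "even n" using nbc b1 by simp
  then show ?thesis by simp
qed

lemma N1_even: "even (n div 2)"
proof -
  obtain b' where "b = Suc (Suc b')" using b1 by (cases b; cases "b - 1") auto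
  then have "n div 2 = 2 * (2^b' * c)" using nbc by simp
  then show ?thesis by simp
qed

lemma c_le_n: "c < n"
proof -
  have "2^b \<ge> (2::nat)" using b1 by (metis one_less_power less_imp_le_nat Suc_1 lessI order.strict_implies_order power_one_right power_increasing)
  then have "2^b * c \<ge> 2 * c" by simp
  then show ?thesis using nbc c1 by simp
qed

lemma N1_ge2: "n div 2 \<ge> 2"
  using c_le_n c1 n_even by linarith

lemma n_ge2: "n \<ge> 2" using N1_ge2 n_even by linarith

lemma int_n: "int n = 2 * int (n div 2)"
  using n_even by (metis of_nat_mult of_nat_numeral)

lemma c_dvd_n: "int c dvd int n" using nbc by simp

lemma GA_in: "GA \<in> G4c_gens n k" by (simp add: G4c_gens_def)
lemma GD_in: "GD \<in> G4c_gens n k" by (simp add: G4c_gens_def)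
lemma GG_in: "g \<in> Ggens n k \<Longrightarrow> g \<in> G4c_gens n k" by (simp add: G4c_gens_def)

lemma Xword_words: "j \<in> {1..k} \<Longrightarrow> Xword n j \<in> words (G4c_gens n k)"
  unfolding Xword_def
  by (auto simp: gletter_def Ggens_def G4c_gens_def intro!: words_concat)

lemma subst_words: "u \<in> set us \<Longrightarrow> subst_eq n u \<in> words (G4c_gens n k)"
proof -
  assume u: "u \<in> set us"
  have "\<forall>l\<in>set u. subst_let n l \<in> words (G4c_gens n k)"
  proof
    fix l assume l: "l \<in> set u"
    then have lv: "ulet_vars l \<subseteq> {1..k}" using vars u by auto
    show "subst_let n l \<in> words (G4c_gens n k)"
      using lv Xword_words by (cases l) (auto simp: subst_let_def gletter_def G4c_gens_def ulet_vars_def)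
  qed
  then show ?thesis unfolding subst_eq_def by (auto intro!: words_concat)
qed

lemma rels_words: "r \<in> G4c_rels n b c k us \<Longrightarrow> r \<in> words (G4c_gens n k)"
proof -
  assume r: "r \<in> G4c_rels n b c k us"
  have gl: "g \<in> Ggens n k \<Longrightarrow> gletter g \<in> words (G4c_gens n k)" for g
    by (simp add: gletter_def G4c_gens_def)
  have glA: "gletter GA \<in> words (G4c_gens n k)" "gletter GD \<in> words (G4c_gens n k)"
    by (simp_all add: gletter_def G4c_gens_def)
  have rep: "replicate m (GD, False) \<in> words (G4c_gens n k)" for m
    by (simp add: G4c_gens_def)
  have itc: "itcomm w g l \<in> words (G4c_gens n k)" if "w \<in> words (G4c_gens n k)" "g \<in> words (G4c_gens n k)" for w g l
    using that by (induction l) (auto simp: wcomm_def)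
  show ?thesis using r gl glA rep itc subst_words
    unfolding G4c_rels_def by (auto simp: wcomm_def)
qed

end

context G4setup
begin

lemma forward:
  assumes hf: "f \<in> hom (G4c n b c k us) (dihedral_pres n)"
    and sf: "f ` carrier (G4c n b c k us) = carrier (dihedral_pres n)"
  shows "has_solution_Dn n k us"
proof -
  define X4 where "X4 = G4c_gens n k"
  define R4 where "R4 = G4c_rels n b c k us"
  define N1 where "N1 = n div 2"
  define C2 where "C2 = DihC (int n)"
  define C1 where "C1 = DihC (int N1)"
  have G4eq: "G4c n b c k us = presented_group X4 R4" by (simp add: G4c_def X4_def R4_def)
  have n2: "n \<ge> 2" by (rule n_ge2)
  have N12: "N1 \<ge> 2" unfolding N1_def by (rule N1_ge2)
  have intn: "int n = 2 * int N1" unfolding N1_def by (rule int_n)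
  have n0: "int n > 0" using n2 by simp
  have grC2: "group C2" unfolding C2_def using n0 by (rule DihC_group)
  interpret C2: group C2 by (rule grC2)
  have grC1: "group C1" unfolding C1_def using N12 by (intro DihC_group) simp
  interpret C1: group C1 by (rule grC1)
  have grG4: "group (G4c n b c k us)" by (simp add: G4eq pg_group)
  define F where "F = PhiD n \<circ> f"
  have hF: "F \<in> hom (presented_group X4 R4) C2"
    unfolding F_def C2_def using hom_compose[OF hf PhiD_hom[OF n2]] G4eq by simp
  have Fsurj: "\<exists>x\<in>carrier (presented_group X4 R4). F x = p" if p: "p \<in> carrier C2" for p
  proof -
    have "PsiD n p \<in> carrier (dihedral_pres n)" by (rule PsiD_carrier[OF n2])
    then obtain x where x: "x \<in> carrier (G4c n b c k us)" "f x = PsiD n p" using sf by (metis imageE)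
    have "F x = p" using x p PhiPsi[OF n2] by (simp add: F_def C2_def)
    then show ?thesis using x G4eq by auto
  qed
  define \<rho> where "\<rho> x = (if x \<in> X4 then F (wclass X4 R4 [(x,False)]) else (False,0))" for x
  have rho_c: "\<rho> ` UNIV \<subseteq> carrier C2"
  proof
    fix y assume "y \<in> \<rho> ` UNIV"
    then obtain x where y: "y = \<rho> x" by auto
    show "y \<in> carrier C2"
    proof (cases "x \<in> X4")
      case True
      then have "wclass X4 R4 [(x,False)] \<in> carrier (presented_group X4 R4)" by simp
      then show ?thesis using y True hom_in_carrier[OF hF] by (simp add: \<rho>_def)
    next
      case False then show ?thesis using y n0 by (simp add: \<rho>_def C2_def)
    qed
  qed
  have rc: "\<rho> x \<in> carrier C2" for x using rho_c by auto
  have F1: "F (wclass X4 R4 w) = evalw C2 \<rho> w" if w: "w \<in> words X4" for w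
  proof -
    have "F (wclass X4 R4 w) = evalw C2 (\<lambda>x. F (wclass X4 R4 [(x,False)])) w"
      by (rule C2.hom_from_pg[OF hF w])
    also have "\<dots> = evalw C2 \<rho> w" by (rule evalw_cong[OF _ w]) (simp add: \<rho>_def)
    finally show ?thesis .
  qed
  have F2: "evalw C2 \<rho> r = (False,0)" if r: "r \<in> R4" for r
  proof -
    have rw: "r \<in> words X4" using r rels_words by (simp add: X4_def R4_def)
    have "evalw C2 (\<lambda>x. F (wclass X4 R4 [(x,False)])) r = \<one>\<^bsub>C2\<^esub>"
      by (rule C2.hom_from_pg_rel[OF hF r rw])
    moreover have "evalw C2 (\<lambda>x. F (wclass X4 R4 [(x,False)])) r = evalw C2 \<rho> r"
      by (rule evalw_cong[OF _ rw]) (simp add: \<rho>_def)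
    ultimately show ?thesis by (simp add: C2_def)
  qed
  have Hgen2: "carrier C2 \<subseteq> S" if S: "S \<subseteq> carrier C2" "(False,0) \<in> S" "\<forall>x\<in>S. \<forall>y\<in>S. x \<otimes>\<^bsub>C2\<^esub> y \<in> S"
    "\<forall>x\<in>S. inv\<^bsub>C2\<^esub> x \<in> S" "\<rho> ` X4 \<subseteq> S" for S
  proof
    fix p assume p: "p \<in> carrier C2"
    obtain x where x: "x \<in> carrier (presented_group X4 R4)" "F x = p" using Fsurj[OF p] by blast
    then obtain w where w: "w \<in> words X4" "x = wclass X4 R4 w" by auto
    have one: "\<one>\<^bsub>C2\<^esub> \<in> S" using S by (simp add: C2_def)
    have "evalw C2 \<rho> w \<in> S" by (rule C2.evalw_in_subset[OF S(1) one S(3) S(4) S(5) w(1)])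
    then show "p \<in> S" using x w F1 by simp
  qed
  define A where "A = \<rho> GA"
  define D where "D = \<rho> GD"
  have Ac: "A \<in> carrier C2" and Dc: "D \<in> carrier C2" using rc by (simp_all add: A_def D_def)
  have one2: "\<one>\<^bsub>C2\<^esub> = (False,0)" by (simp add: C2_def)
  have R1: "A \<otimes>\<^bsub>C2\<^esub> A = (False,0)"
  proof -
    have r: "gletter GA @ gletter GA \<in> R4" by (simp add: R4_def G4c_rels_def)
    show ?thesis using F2[OF r] Ac by (simp add: gletter_def A_def)
  qed
  have R2: "A \<otimes>\<^bsub>C2\<^esub> D \<otimes>\<^bsub>C2\<^esub> A \<otimes>\<^bsub>C2\<^esub> D = (False,0)"
  proof -
    have r: "gletter GA @ gletter GD @ gletter GA @ gletter GD \<in> R4" by (simp add: R4_def G4c_rels_def)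
    show ?thesis using F2[OF r] Ac Dc by (simp add: gletter_def A_def D_def C2.m_assoc)
  qed
  have R3: "\<rho> g \<otimes>\<^bsub>C2\<^esub> \<rho> g = (False,0)" if g: "g \<in> Ggens n k" for g
  proof -
    have r: "gletter g @ gletter g \<in> R4" using g by (auto simp: R4_def G4c_rels_def)
    show ?thesis using F2[OF r] rc by (simp add: gletter_def)
  qed
  have R4c: "\<rho> g \<otimes>\<^bsub>C2\<^esub> A = A \<otimes>\<^bsub>C2\<^esub> \<rho> g" if g: "g \<in> Ggens n k" for g
  proof -
    have r: "wcomm (gletter g) (gletter GA) \<in> R4" using g by (auto simp: R4_def G4c_rels_def)
    have "evalw C2 \<rho> (wcomm (gletter g) (gletter GA)) = \<one>\<^bsub>C2\<^esub>" using F2[OF r] one2 by simp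
    then have "\<rho> g \<otimes>\<^bsub>C2\<^esub> A \<otimes>\<^bsub>C2\<^esub> inv\<^bsub>C2\<^esub> \<rho> g \<otimes>\<^bsub>C2\<^esub> inv\<^bsub>C2\<^esub> A = \<one>\<^bsub>C2\<^esub>"
      using rho_c by (simp add: C2.evalw_wcomm C2.evalw_gletter rc A_def)
    then show ?thesis using C2.comm_one_imp rc Ac by blast
  qed
  have R5: "\<rho> g \<otimes>\<^bsub>C2\<^esub> \<rho> g' = \<rho> g' \<otimes>\<^bsub>C2\<^esub> \<rho> g" if g: "g \<in> Ggens n k" "g' \<in> Ggens n k" for g g'
  proof -
    have r: "wcomm (gletter g) (gletter g') \<in> R4" using g by (auto simp: R4_def G4c_rels_def)
    have "evalw C2 \<rho> (wcomm (gletter g) (gletter g')) = \<one>\<^bsub>C2\<^esub>" using F2[OF r] one2 by simp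
    then have "\<rho> g \<otimes>\<^bsub>C2\<^esub> \<rho> g' \<otimes>\<^bsub>C2\<^esub> inv\<^bsub>C2\<^esub> \<rho> g \<otimes>\<^bsub>C2\<^esub> inv\<^bsub>C2\<^esub> \<rho> g' = \<one>\<^bsub>C2\<^esub>"
      using rho_c by (simp add: C2.evalw_wcomm C2.evalw_gletter rc)
    then show ?thesis using C2.comm_one_imp rc by blast
  qed
  have R6: "icv C2 (D [^]\<^bsub>C2\<^esub> c) (\<rho> g) b = (False,0)" if g: "g \<in> Ggens n k" for g
  proof -
    have r: "itcomm (replicate c (GD, False)) (gletter g) b \<in> R4" using g by (auto simp: R4_def G4c_rels_def)
    have "evalw C2 \<rho> (itcomm (replicate c (GD, False)) (gletter g) b) = (False,0)" using F2[OF r] by simp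
    moreover have "evalw C2 \<rho> (itcomm (replicate c (GD, False)) (gletter g) b) =
        icv C2 (evalw C2 \<rho> (replicate c (GD, False))) (evalw C2 \<rho> (gletter g)) b"
      using rho_c by (intro C2.evalw_itcomm) auto
    ultimately show ?thesis using rc by (simp add: C2.evalw_replicate C2.evalw_gletter D_def)
  qed
  define Cc where "Cc = DihC (int c)"
  have c0: "int c > 0" using c1 by simp
  have grCc: "group Cc" unfolding Cc_def using c0 by (rule DihC_group)
  interpret Cc: group Cc by (rule grCc)
  have hP: "proj (int c) \<in> hom C2 Cc" unfolding C2_def Cc_def using n0 c0 c_dvd_n by (rule proj_hom)
  have ghP: "group_hom C2 Cc (proj (int c))" using grC2 grCc hP by (auto simp: group_hom_def group_hom_axioms_def)
  have P1: "proj (int c) (False,0) = (False,0)" by (simp add: proj_def)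
  have Lres: "fst (proj (int c) A) \<and> \<not> fst (proj (int c) D) \<and> coprime (snd (proj (int c) D)) (int c)"
  proof (rule Lc[OF oc c1, of b "proj (int c) A" "proj (int c) D" "proj (int c) ` \<rho> ` Ggens n k", folded Cc_def])
    show "b \<ge> 1" using b1 by simp
    show "proj (int c) A \<in> carrier Cc" using hom_in_carrier[OF hP Ac] .
    show "proj (int c) D \<in> carrier Cc" using hom_in_carrier[OF hP Dc] .
    show "proj (int c) ` \<rho> ` Ggens n k \<subseteq> carrier Cc"
    proof
      fix y assume "y \<in> proj (int c) ` \<rho> ` Ggens n k"
      then obtain x where "y = proj (int c) (\<rho> x)" by auto
      then show "y \<in> carrier Cc" using hom_in_carrier[OF hP rc[of x]] by simp
    qed
    show "proj (int c) A \<otimes>\<^bsub>Cc\<^esub> proj (int c) A = (False, 0)"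
      using R1 hom_mult[OF hP Ac Ac] P1 by simp
    show "proj (int c) A \<otimes>\<^bsub>Cc\<^esub> proj (int c) D \<otimes>\<^bsub>Cc\<^esub> proj (int c) A \<otimes>\<^bsub>Cc\<^esub> proj (int c) D = (False, 0)"
      using R2 Ac Dc P1 by (simp add: hom_mult[OF hP, symmetric])
    show "\<forall>g\<in>proj (int c) ` \<rho> ` Ggens n k. g \<otimes>\<^bsub>Cc\<^esub> g = (False, 0)"
      using R3 rc P1 by (auto simp: hom_mult[OF hP, symmetric])
    show "\<forall>g\<in>proj (int c) ` \<rho> ` Ggens n k. g \<otimes>\<^bsub>Cc\<^esub> proj (int c) A = proj (int c) A \<otimes>\<^bsub>Cc\<^esub> g"
      using R4c rc Ac by (auto simp: hom_mult[OF hP, symmetric])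
    show "\<forall>g\<in>proj (int c) ` \<rho> ` Ggens n k. \<forall>g'\<in>proj (int c) ` \<rho> ` Ggens n k. g \<otimes>\<^bsub>Cc\<^esub> g' = g' \<otimes>\<^bsub>Cc\<^esub> g"
      using R5 rc by (auto simp: hom_mult[OF hP, symmetric])
    show "\<forall>g\<in>proj (int c) ` \<rho> ` Ggens n k. icv Cc (proj (int c) D [^]\<^bsub>Cc\<^esub> c) g b = (False, 0)"
    proof
      fix g assume "g \<in> proj (int c) ` \<rho> ` Ggens n k"
      then obtain g0 where g0: "g0 \<in> Ggens n k" "g = proj (int c) (\<rho> g0)" by auto
      have "proj (int c) (icv C2 (D [^]\<^bsub>C2\<^esub> c) (\<rho> g0) b) = icv Cc (proj (int c) (D [^]\<^bsub>C2\<^esub> c)) (proj (int c) (\<rho> g0)) b"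
        using Dc rc by (intro icv_hom[OF grC2 grCc hP]) auto
      moreover have "proj (int c) (D [^]\<^bsub>C2\<^esub> c) = proj (int c) D [^]\<^bsub>Cc\<^esub> c"
        using hom_nat_pow[OF hP Dc grC2 grCc] .
      ultimately show "icv Cc (proj (int c) D [^]\<^bsub>Cc\<^esub> c) g b = (False, 0)" using R6[OF g0(1)] g0 P1 by simp
    qed
    fix S assume S: "S \<subseteq> carrier Cc" "(False, 0) \<in> S" "\<forall>x\<in>S. \<forall>y\<in>S. x \<otimes>\<^bsub>Cc\<^esub> y \<in> S"
      "\<forall>x\<in>S. inv\<^bsub>Cc\<^esub> x \<in> S" "proj (int c) A \<in> S" "proj (int c) D \<in> S" "proj (int c) ` \<rho> ` Ggens n k \<subseteq> S"
    define S' where "S' = {p \<in> carrier C2. proj (int c) p \<in> S}"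
    have "carrier C2 \<subseteq> S'"
    proof (rule Hgen2)
      show "S' \<subseteq> carrier C2" by (auto simp: S'_def)
      show "(False, 0) \<in> S'" using S(2) n0 P1 by (simp add: S'_def C2_def)
      show "\<forall>x\<in>S'. \<forall>y\<in>S'. x \<otimes>\<^bsub>C2\<^esub> y \<in> S'" using S(3) by (auto simp: S'_def hom_mult[OF hP])
      show "\<forall>x\<in>S'. inv\<^bsub>C2\<^esub> x \<in> S'" using S(4) by (auto simp: S'_def group_hom.hom_inv[OF ghP])
      show "\<rho> ` X4 \<subseteq> S'"
      proof
        fix y assume "y \<in> \<rho> ` X4"
        then obtain x where x: "x \<in> X4" "y = \<rho> x" by auto
        then have "x = GA \<or> x = GD \<or> x \<in> Ggens n k" by (auto simp: X4_def G4c_gens_def)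
        then show "y \<in> S'" using x S(5-7) rc by (auto simp: S'_def A_def D_def)
      qed
    qed
    then show "carrier Cc \<subseteq> S"
    proof -
      assume sub: "carrier C2 \<subseteq> S'"
      show "carrier Cc \<subseteq> S"
      proof
        fix q assume q: "q \<in> carrier Cc"
        obtain e i where qe: "q = (e,i)" by force
        have i: "0 \<le> i" "i < int c" using q qe by (auto simp: Cc_def)
        have "(e,i) \<in> carrier C2" using i c_le_n by (simp add: C2_def)
        then have "proj (int c) (e,i) \<in> S" using sub by (auto simp: S'_def)
        then show "q \<in> S" using qe i by (simp add: proj_def)
      qed
    qed
  qed
  obtain \<alpha> where A\<alpha>: "A = (True, \<alpha>)" using Lres by (cases A) (auto simp: proj_def)
  obtain \<delta> where D\<delta>: "D = (False, \<delta>)" using Lres by (cases D) (auto simp: proj_def)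
  have \<alpha>: "0 \<le> \<alpha>" "\<alpha> < int n" using Ac A\<alpha> by (auto simp: C2_def)
  have \<delta>: "0 \<le> \<delta>" "\<delta> < int n" using Dc D\<delta> by (auto simp: C2_def)
  have copc: "coprime \<delta> (int c)" using Lres D\<delta> c0 by (simp add: proj_def)
  have N1pos: "int N1 > 0" using N12 by simp
  have N1e: "even (int N1)" using N1_even by (simp add: N1_def)
  define T where "T = Ssub (int n) 2 \<alpha>"
  have two_dvd: "(2::int) dvd int n" using intn by simp
  note TC = Ssub_closed[OF n0 two_dvd, of \<alpha>, folded C2_def T_def]
  have AT: "A \<in> T" using A\<alpha> \<alpha> by (simp add: T_def Ssub_def)
  have half: "even x" if "int n dvd 2 * x" for x :: int
  proof -
    have "int N1 dvd x" using that intn by simp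
    then show ?thesis using N1e by (metis dvd_trans)
  qed
  have GT: "\<rho> g \<in> T" if g: "g \<in> Ggens n k" for g
  proof -
    obtain e i where ge: "\<rho> g = (e,i)" by force
    have i: "0 \<le> i" "i < int n" using rc[of g] ge by (auto simp: C2_def)
    show ?thesis
    proof (cases e)
      case True
      have "(- i + \<alpha>) mod int n = (- \<alpha> + i) mod int n"
        using R4c[OF g] ge True A\<alpha> by (simp add: C2_def)
      then have "int n dvd (- i + \<alpha>) - (- \<alpha> + i)" by (simp add: mod_eq_dvd_iff)
      moreover have "(- i + \<alpha>) - (- \<alpha> + i) = 2 * (\<alpha> - i)" by simp
      ultimately have "even (\<alpha> - i)" using half by metis
      then have "i mod 2 = \<alpha> mod 2" by (simp add: mod_eq_dvd_iff dvd_diff_commute)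
      then show ?thesis using ge True i by (simp add: T_def Ssub_def)
    next
      case False
      have "(i + i) mod int n = 0" using R3[OF g] ge False by (simp add: C2_def)
      then have "int n dvd i + i" by (simp only: mod_eq_0_iff_dvd)
      moreover have "i + i = 2 * i" by simp
      ultimately have "int n dvd 2 * i" by metis
      then have "even i" by (rule half)
      then show ?thesis using ge False i by (simp add: T_def Ssub_def)
    qed
  qed
  have rhoT: "\<rho> ` X4 \<subseteq> T" if "D \<in> T"
  proof
    fix y assume "y \<in> \<rho> ` X4"
    then obtain x where x: "x \<in> X4" "y = \<rho> x" by auto
    then have "x = GA \<or> x = GD \<or> x \<in> Ggens n k" by (auto simp: X4_def G4c_gens_def)
    then show "y \<in> T" using x AT that GT by (auto simp: A_def D_def)
  qed
  have \<delta>odd: "odd \<delta>"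
  proof
    assume "even \<delta>"
    then have "D \<in> T" using D\<delta> \<delta> by (simp add: T_def Ssub_def)
    then have "carrier C2 \<subseteq> T" by (rule Hgen2[OF TC(1) TC(2) TC(3) TC(4) rhoT])
    moreover have "(False,1) \<in> carrier C2" using n2 by (simp add: C2_def)
    ultimately show False by (auto simp: T_def Ssub_def)
  qed
  have cop: "coprime \<delta> (int n)"
  proof -
    have "coprime \<delta> 2" using \<delta>odd by (simp add: coprime_commute)
    then have "coprime \<delta> (2^b)" by simp
    then show ?thesis using copc nbc by simp
  qed
  define \<iota> where "\<iota> = iota (int n) \<alpha> \<delta>"
  have h\<iota>: "\<iota> \<in> hom C1 C2" unfolding \<iota>_def C1_def C2_def using intn N1pos by (rule iota_hom)
  have \<iota>s: "\<iota> (True,0) = \<rho> GA" using \<alpha> A\<alpha> by (simp add: \<iota>_def iota_def A_def)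
  have e2: "\<delta> + \<delta> = 2 * \<delta>" by simp
  have \<iota>t: "\<iota> (False,1) = \<rho> GD \<otimes>\<^bsub>C2\<^esub> \<rho> GD" using D\<delta> e2 by (simp add: \<iota>_def iota_def D_def C2_def)
  have xvT: "evalw C2 \<rho> (Xword n j) \<in> T" if j: "j \<in> {1..k}" for j
  proof -
    define B where "B i = gletter (GG i j) @ gletter GD @ winv (gletter (GG i j))" for i
    have xw: "Xword n j = gletter (GG 0 j) @ concat (map B [1..<N1 + 1])"
      unfolding Xword_def N1_def B_def[abs_def] by (rule HOL.refl)
    have blk: "\<forall>i\<in>set [1..<N1 + 1]. evalw (DihC (int n)) \<rho> (B i) \<in> {(False,\<delta>), (False, (-\<delta>) mod int n)}"
    proof
      fix i assume "i \<in> set [1..<N1 + 1]"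
      have "evalw C2 \<rho> (B i) = \<rho> (GG i j) \<otimes>\<^bsub>C2\<^esub> D \<otimes>\<^bsub>C2\<^esub> inv\<^bsub>C2\<^esub> \<rho> (GG i j)"
        using rc by (simp add: B_def gletter_def winv_def D_def C2.m_assoc)
      then show "evalw (DihC (int n)) \<rho> (B i) \<in> {(False,\<delta>), (False, (-\<delta>) mod int n)}"
        using conj_rot[OF n0 _ \<delta>, of "\<rho> (GG i j)"] rc D\<delta> by (simp add: C2_def)
    qed
    obtain s where s: "even (s - int (length [1..<N1 + 1]))"
        "evalw (DihC (int n)) \<rho> (concat (map B [1..<N1 + 1])) = (False, (\<delta> * s) mod int n)"
      using concat_blocks[OF n0 \<delta> rho_c[unfolded C2_def] blk] by blast
    have "even s" using s(1) N1e by simp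
    then have "(False, (\<delta> * s) mod int n) \<in> T" using n0 two_dvd by (simp add: T_def Ssub_def mod_mod_cancel)
    moreover have "\<rho> (GG 0 j) \<in> T" using GT j by (simp add: Ggens_def)
    moreover have "evalw C2 \<rho> (Xword n j) = \<rho> (GG 0 j) \<otimes>\<^bsub>C2\<^esub> (False, (\<delta> * s) mod int n)"
    proof -
      have s2: "evalw C2 \<rho> (concat (map B [1..<N1 + 1])) = (False, (\<delta> * s) mod int n)"
        using s(2) unfolding C2_def .
      have "evalw C2 \<rho> (Xword n j) = evalw C2 \<rho> (gletter (GG 0 j)) \<otimes>\<^bsub>C2\<^esub> evalw C2 \<rho> (concat (map B [1..<N1 + 1]))"
        unfolding xw by (rule C2.evalw_append[OF rho_c]) simp_all
      also have "\<dots> = \<rho> (GG 0 j) \<otimes>\<^bsub>C2\<^esub> (False, (\<delta> * s) mod int n)"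
        by (simp only: s2 C2.evalw_gletter[OF rc])
      finally show ?thesis .
    qed
    ultimately show ?thesis using TC by simp
  qed
  have xvpre: "\<exists>y. y \<in> carrier C1 \<and> \<iota> y = evalw C2 \<rho> (Xword n j)" if j: "j \<in> {1..k}" for j
  proof -
    obtain e v where ev: "evalw C2 \<rho> (Xword n j) = (e,v)" by force
    have v: "0 \<le> v" "v < int n" "v mod 2 = (if e then \<alpha> mod 2 else 0)" using xvT[OF j] ev by (auto simp: T_def Ssub_def)
    have "even (v - (if e then \<alpha> else 0))" using v(3) by (cases e) (simp_all add: mod_eq_dvd_iff[symmetric] even_iff_mod_2_eq_zero)
    then obtain m where m: "0 \<le> m" "m < int N1" "iota (int n) \<alpha> \<delta> (e,m) = (e,v)"
      using iota_surj[OF intn N1pos cop v(1) v(2)] by blast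
    then show ?thesis using ev by (intro exI[of _ "(e,m)"]) (simp add: C1_def \<iota>_def)
  qed
  define h' where "h' j = (SOME y. y \<in> carrier C1 \<and> \<iota> y = evalw C2 \<rho> (Xword n j))" for j
  have hJ: "\<forall>j\<in>{1..k}. h' j \<in> carrier C1 \<and> \<iota> (h' j) = evalw C2 \<rho> (Xword n j)"
  proof
    fix j assume j: "j \<in> {1..k}"
    show "h' j \<in> carrier C1 \<and> \<iota> (h' j) = evalw C2 \<rho> (Xword n j)"
      unfolding h'_def by (rule someI_ex[OF xvpre[OF j]])
  qed
  have s1: "(True,0) \<in> carrier C1" and t1: "(False,1) \<in> carrier C1" using N12 by (simp_all add: C1_def)
  have eq1: "eval_eq C1 (True,0) (False,1) h' u = (False,0)" if u: "u \<in> set us" for u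
  proof -
    have vu: "\<forall>l\<in>set u. ulet_vars l \<subseteq> {1..k}" using vars u by auto
    have "evalw C2 \<rho> (subst_eq n u) = \<iota> (eval_eq C1 (True,0) (False,1) h' u)"
      by (rule subst_eval[OF grC1 grC2 h\<iota> rho_c s1 t1 \<iota>s \<iota>t hJ vu])
    moreover have r: "subst_eq n u \<in> R4" using u by (simp add: R4_def G4c_rels_def)
    ultimately have z: "\<iota> (eval_eq C1 (True,0) (False,1) h' u) = (False,0)" using F2[OF r] by simp
    have "eval_eq C1 (True,0) (False,1) h' u \<in> carrier C1"
      using vu hJ by (intro C1.eval_eq_closed[OF s1 t1]) fastforce
    moreover obtain e m where em: "eval_eq C1 (True,0) (False,1) h' u = (e,m)" by force
    ultimately have "0 \<le> m" "m < int N1" by (auto simp: C1_def)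
    moreover have "iota (int n) \<alpha> \<delta> (e, m) = (False, 0)" using z em by (simp add: \<iota>_def)
    ultimately have "e = False \<and> m = 0" by (rule iota_inj1[OF intn N1pos cop])
    then show ?thesis using em by simp
  qed
  define Q where "Q = dihedral_pres N1"
  have grQ: "group Q" unfolding Q_def using N12 by (rule grpP)
  have hPsi: "PsiD N1 \<in> hom C1 Q" unfolding C1_def Q_def using N12 by (rule PsiD_hom)
  show ?thesis unfolding has_solution_Dn_def
  proof (intro exI[of _ "\<lambda>j. PsiD N1 (h' j)"] conjI ballI)
    fix j assume "j \<in> {1..k}"
    show "PsiD N1 (h' j) \<in> carrier (dihedral_pres (n div 2))"
      using PsiD_carrier[OF N12] by (simp add: N1_def)
  next
    fix u assume u: "u \<in> set us"
    have vu: "\<forall>l\<in>set u. \<forall>j\<in>ulet_vars l. h' j \<in> carrier C1" using vars u hJ by fastforce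
    have "PsiD N1 (eval_eq C1 (True,0) (False,1) h' u) =
        eval_eq Q (PsiD N1 (True,0)) (PsiD N1 (False,1)) (\<lambda>j. PsiD N1 (h' j)) u"
      by (rule eval_eq_hom[OF grC1 grQ hPsi s1 t1 vu])
    moreover have "PsiD N1 (eval_eq C1 (True,0) (False,1) h' u) = \<one>\<^bsub>Q\<^esub>"
      using eq1[OF u] hom_one[OF hPsi grC1 grQ] by (simp add: C1_def)
    ultimately show "eval_eq (dihedral_pres (n div 2)) (dS (n div 2)) (dT (n div 2)) (\<lambda>j. PsiD N1 (h' j)) u =
        \<one>\<^bsub>dihedral_pres (n div 2)\<^esub>"
      using PsiD_S0[OF N12] PsiD_T1[OF N12] by (simp add: Q_def N1_def)
  qed
qed

end

lemma sum_sigma: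
  fixes p :: nat
  shows "(\<Sum>i\<in>{1..M}. (if i \<le> p then 1 else -1::int)) = (if M \<le> p then int M else 2 * int p - int M)"
proof (induction M)
  case 0 then show ?case by simp
next
  case (Suc M)
  have "(\<Sum>i\<in>{1..Suc M}. (if i \<le> p then 1 else -1::int)) =
        (\<Sum>i\<in>{1..M}. (if i \<le> p then 1 else -1::int)) + (if Suc M \<le> p then 1 else -1)"
    by (simp add: sum.cl_ivl_Suc)
  then show ?case using Suc by auto
qed

context G4setup
begin

lemma backward:
  assumes sol: "has_solution_Dn n k us"
  shows "\<exists>f. f \<in> hom (G4c n b c k us) (dihedral_pres n) \<and>
              f ` carrier (G4c n b c k us) = carrier (dihedral_pres n)"
proof -
  define X4 where "X4 = G4c_gens n k"
  define R4 where "R4 = G4c_rels n b c k us"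
  define N1 where "N1 = n div 2"
  define C2 where "C2 = DihC (int n)"
  define C1 where "C1 = DihC (int N1)"
  define Q where "Q = dihedral_pres N1"
  have G4eq: "G4c n b c k us = presented_group X4 R4" by (simp add: G4c_def X4_def R4_def)
  have n2: "n \<ge> 2" by (rule n_ge2)
  have N12: "N1 \<ge> 2" unfolding N1_def by (rule N1_ge2)
  have intn: "int n = 2 * int N1" unfolding N1_def by (rule int_n)
  have n0: "int n > 0" using n2 by simp
  have N1pos: "int N1 > 0" using N12 by simp
  have N1e: "even (int N1)" using N1_even by (simp add: N1_def)
  have grC2: "group C2" unfolding C2_def using n0 by (rule DihC_group)
  interpret C2: group C2 by (rule grC2)
  have grC1: "group C1" unfolding C1_def using N12 by (intro DihC_group) simp
  interpret C1: group C1 by (rule grC1)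
  have grQ: "group Q" unfolding Q_def using N12 by (rule grpP)
  obtain h where hc: "\<forall>j\<in>{1..k}. h j \<in> carrier Q"
    and heq: "\<forall>u\<in>set us. eval_eq Q (dS N1) (dT N1) h u = \<one>\<^bsub>Q\<^esub>"
    using sol by (auto simp: has_solution_Dn_def Q_def N1_def)
  have hPhi: "PhiD N1 \<in> hom Q C1" unfolding Q_def C1_def using N12 by (rule PhiD_hom)
  define h' where "h' j = PhiD N1 (h j)" for j
  have h'c: "h' j \<in> carrier C1" if "j \<in> {1..k}" for j
    using hom_in_carrier[OF hPhi] hc that by (simp add: h'_def)
  have s1: "(True,0) \<in> carrier C1" and t1: "(False,1) \<in> carrier C1" using N12 by (simp_all add: C1_def)
  have eq1: "eval_eq C1 (True,0) (False,1) h' u = (False,0)" if u: "u \<in> set us" for u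
  proof -
    have vu: "\<forall>l\<in>set u. \<forall>j\<in>ulet_vars l. h j \<in> carrier Q" using vars u hc by fastforce
    have "PhiD N1 (eval_eq Q (dS N1) (dT N1) h u) = eval_eq C1 (PhiD N1 (dS N1)) (PhiD N1 (dT N1)) (\<lambda>j. PhiD N1 (h j)) u"
      using dS_carrier[OF N12] dT_carrier[OF N12] by (intro eval_eq_hom[OF grQ grC1 hPhi _ _ vu]) (simp_all add: Q_def)
    moreover have "PhiD N1 (eval_eq Q (dS N1) (dT N1) h u) = (False,0)"
      using heq u hom_one[OF hPhi grQ grC1] by (simp add: C1_def)
    ultimately show ?thesis using PhiD_S[OF N12] PhiD_T[OF N12] by (simp add: h'_def[abs_def])
  qed
  define pp where "pp j = nat ((snd (h' j) + int N1 div 2) mod int N1)" for j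
  define \<rho> where "\<rho> x = (case x of GA \<Rightarrow> (True,0::int) | GD \<Rightarrow> (False,1)
      | GG i j \<Rightarrow> (if i = 0 then (fst (h' j), 0) else if i \<le> pp j then (False,0) else (True,0)))" for x
  have rGG: "\<exists>e. \<rho> (GG i j) = (e,0)" for i j by (auto simp: \<rho>_def)
  have rho_c: "\<rho> ` UNIV \<subseteq> carrier C2"
  proof
    fix y assume "y \<in> \<rho> ` UNIV"
    then obtain x where y: "y = \<rho> x" by auto
    show "y \<in> carrier C2" using y n2 by (cases x) (auto simp: \<rho>_def C2_def)
  qed
  have rc: "\<rho> x \<in> carrier C2" for x using rho_c by auto
  have D1c: "(False,1) \<in> carrier C2" using n2 by (simp add: C2_def)
  define \<iota> where "\<iota> = iota (int n) 0 1"
  have h\<iota>: "\<iota> \<in> hom C1 C2" unfolding \<iota>_def C1_def C2_def using intn N1pos by (rule iota_hom)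
  have \<iota>s: "\<iota> (True,0) = \<rho> GA" using n2 by (simp add: \<iota>_def iota_def \<rho>_def)
  have \<iota>t: "\<iota> (False,1) = \<rho> GD \<otimes>\<^bsub>C2\<^esub> \<rho> GD" by (simp add: \<iota>_def iota_def \<rho>_def C2_def)
  have Xval: "evalw C2 \<rho> (Xword n j) = \<iota> (h' j)" if j: "j \<in> {1..k}" for j
  proof -
    define B where "B i = gletter (GG i j) @ gletter GD @ winv (gletter (GG i j))" for i
    define \<sigma> where "\<sigma> i = (if i \<le> pp j then 1 else -1::int)" for i
    have xw: "Xword n j = gletter (GG 0 j) @ concat (map B [1..<N1 + 1])"
      unfolding Xword_def N1_def B_def[abs_def] by (rule HOL.refl)
    have Bv: "evalw C2 \<rho> (B i) = (False, \<sigma> i mod int n)" if i: "i \<ge> 1" for i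
    proof -
      have "evalw C2 \<rho> (B i) = \<rho> (GG i j) \<otimes>\<^bsub>C2\<^esub> (False,1) \<otimes>\<^bsub>C2\<^esub> inv\<^bsub>C2\<^esub> \<rho> (GG i j)"
        using rc D1c by (simp add: B_def gletter_def winv_def C2.m_assoc \<rho>_def[of GD])
      then show ?thesis using i n2 DihC_inv[OF n0]
        by (simp add: \<rho>_def \<sigma>_def C2_def)
    qed
    have cv: "evalw C2 \<rho> (concat (map B [1..<M + 1])) = (False, (\<Sum>i\<in>{1..M}. \<sigma> i) mod int n)" for M
    proof (induction M)
      case 0 then show ?case by (simp add: C2_def)
    next
      case (Suc M)
      have "[1..<Suc M + 1] = [1..<M + 1] @ [Suc M]" by simp
      then have "evalw C2 \<rho> (concat (map B [1..<Suc M + 1])) =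
          evalw C2 \<rho> (concat (map B [1..<M + 1])) \<otimes>\<^bsub>C2\<^esub> evalw C2 \<rho> (B (Suc M))"
        using rho_c by (simp add: C2.evalw_append del: upt_Suc)
      also have "\<dots> = (False, (\<Sum>i\<in>{1..M}. \<sigma> i) mod int n) \<otimes>\<^bsub>C2\<^esub> (False, \<sigma> (Suc M) mod int n)"
        using Suc Bv[of "Suc M"] by simp
      also have "\<dots> = (False, (\<Sum>i\<in>{1..Suc M}. \<sigma> i) mod int n)"
        by (simp add: C2_def sum.cl_ivl_Suc mod_simps)
      finally show ?case .
    qed
    obtain e m where em: "h' j = (e,m)" by force
    have m: "0 \<le> m" "m < int N1" using h'c[OF j] em by (auto simp: C1_def)
    have ppj: "pp j = nat ((m + int N1 div 2) mod int N1)" by (simp add: pp_def em)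
    have pple: "pp j < N1" using ppj N1pos by (simp add: nat_less_iff)
    have sumv: "(\<Sum>i\<in>{1..N1}. \<sigma> i) = 2 * int (pp j) - int N1"
      unfolding \<sigma>_def using sum_sigma[of "pp j" N1] pple by simp
    have key: "(2 * int (pp j) - int N1) mod int n = (2 * m) mod int n"
    proof -
      have "int (pp j) = (m + int N1 div 2) mod int N1" using ppj N1pos by simp
      then have "2 * int (pp j) = (2 * (m + int N1 div 2)) mod (2 * int N1)" by (simp only: mod_mult_mult1)
      then have "2 * int (pp j) = (2 * m + 2 * (int N1 div 2)) mod int n" using intn by (simp only: distrib_left)
      also have "2 * (int N1 div 2) = int N1" using N1e by simp
      finally have "2 * int (pp j) = (2 * m + int N1) mod int n" .
      then show ?thesis by (simp add: mod_simps)
    qed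
    have "evalw C2 \<rho> (Xword n j) = evalw C2 \<rho> (gletter (GG 0 j)) \<otimes>\<^bsub>C2\<^esub> evalw C2 \<rho> (concat (map B [1..<N1 + 1]))"
      unfolding xw by (rule C2.evalw_append[OF rho_c]) simp_all
    also have "\<dots> = (e, 0) \<otimes>\<^bsub>C2\<^esub> (False, (2 * int (pp j) - int N1) mod int n)"
    proof -
      have g0: "evalw C2 \<rho> (gletter (GG 0 j)) = (e,0)"
        using C2.evalw_gletter[of \<rho> "GG 0 j", OF rc] em by (simp add: \<rho>_def)
      have cN: "evalw C2 \<rho> (concat (map B [1..<N1 + 1])) = (False, (2 * int (pp j) - int N1) mod int n)"
        by (simp only: cv sumv)
      show ?thesis by (simp only: g0 cN)
    qed
    also have "\<dots> = \<iota> (h' j)" using key em by (simp add: C2_def \<iota>_def iota_def)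
    finally show ?thesis .
  qed
  have hJ: "\<forall>j\<in>{1..k}. h' j \<in> carrier C1 \<and> \<iota> (h' j) = evalw C2 \<rho> (Xword n j)"
    using h'c Xval by simp
  have one2: "\<one>\<^bsub>C2\<^esub> = (False,0)" by (simp add: C2_def)
  have DihC_pow_n: "(False,1) [^]\<^bsub>C2\<^esub> m = (False, int m mod int n)" for m :: nat
    unfolding C2_def using n2 by (subst DihC_pow) auto
  have rel: "evalw C2 \<rho> r = (False,0)" if r: "r \<in> R4" for r
  proof -
    have GGe: "\<exists>i j. g = GG i j" if "g \<in> Ggens n k" for g using that by (auto simp: Ggens_def)
    have ev0: "\<rho> g = (False,0) \<or> \<rho> g = (True,0)" if gG: "g \<in> Ggens n k" for g
    proof -
      obtain i j where "g = GG i j" using GGe[OF gG] by blast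
      then show ?thesis by (auto simp: \<rho>_def)
    qed
    have invs: "inv\<^bsub>C2\<^esub> (False,0) = (False,0)" "inv\<^bsub>C2\<^esub> (True,0) = (True,0)"
      using DihC_inv[OF n0, of False 0] DihC_inv[OF n0, of True 0] n0 by (simp_all add: C2_def)
    consider (a) "r = gletter GA @ gletter GA" | (b) "r = replicate n (GD, False)"
      | (c) "r = gletter GA @ gletter GD @ gletter GA @ gletter GD"
      | (d) g g' where "r = wcomm (gletter g) (gletter g')" "g \<in> Ggens n k" "g' \<in> Ggens n k"
      | (e) g where "r = wcomm (gletter g) (gletter GA)" "g \<in> Ggens n k"
      | (f) g where "r = gletter g @ gletter g" "g \<in> Ggens n k"
      | (g) g where "r = itcomm (replicate c (GD, False)) (gletter g) b" "g \<in> Ggens n k"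
      | (h) u where "r = subst_eq n u" "u \<in> set us"
      using r unfolding R4_def G4c_rels_def by blast
    then show ?thesis
    proof cases
      case a then show ?thesis by (simp add: gletter_def \<rho>_def C2_def)
    next
      case b
      have "evalw C2 \<rho> r = (False,1) [^]\<^bsub>C2\<^esub> n" using b D1c by (simp add: C2.evalw_replicate \<rho>_def)
      then show ?thesis using DihC_pow_n[of n] by simp
    next
      case c then show ?thesis using n2 by (simp add: gletter_def \<rho>_def C2_def)
    next
      case d
      have "evalw C2 \<rho> r = \<rho> g \<otimes>\<^bsub>C2\<^esub> \<rho> g' \<otimes>\<^bsub>C2\<^esub> inv\<^bsub>C2\<^esub> \<rho> g \<otimes>\<^bsub>C2\<^esub> inv\<^bsub>C2\<^esub> \<rho> g'"
        using d rho_c rc by (simp add: C2.evalw_wcomm C2.evalw_gletter)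
      then show ?thesis using ev0[OF d(2)] ev0[OF d(3)] invs by (auto simp: C2_def)
    next
      case e
      have "evalw C2 \<rho> r = \<rho> g \<otimes>\<^bsub>C2\<^esub> \<rho> GA \<otimes>\<^bsub>C2\<^esub> inv\<^bsub>C2\<^esub> \<rho> g \<otimes>\<^bsub>C2\<^esub> inv\<^bsub>C2\<^esub> \<rho> GA"
        using e rho_c rc by (simp add: C2.evalw_wcomm C2.evalw_gletter)
      then show ?thesis using ev0[OF e(2)] invs by (auto simp: C2_def \<rho>_def)
    next
      case f then show ?thesis using ev0[OF f(2)] rc by (auto simp: gletter_def C2_def)
    next
      case g
      have "evalw C2 \<rho> r = icv C2 (evalw C2 \<rho> (replicate c (GD, False))) (evalw C2 \<rho> (gletter g)) b"
        using g rho_c by (simp add: C2.evalw_itcomm)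
      also have "evalw C2 \<rho> (replicate c (GD, False)) = (False, int c)"
        using D1c DihC_pow_n[of c] c_le_n by (simp add: C2.evalw_replicate \<rho>_def)
      also have "evalw C2 \<rho> (gletter g) = \<rho> g" using rc by (simp add: C2.evalw_gletter)
      finally have ev: "evalw C2 \<rho> r = icv C2 (False, int c) (\<rho> g) b" .
      obtain b' where b': "b = Suc b'" using b1 by (cases b) auto
      have cc: "(False, int c) \<in> carrier C2" using c_le_n by (simp add: C2_def)
      show ?thesis
      proof (cases "\<rho> g = (False,0)")
        case True
        then show ?thesis using ev C2.icv_one[OF cc, of b'] b' one2 by simp
      next
        case False
        then have "\<rho> g = (True,0)" using ev0[OF g(2)] by simp
        moreover have "icv C2 (False, int c) (True,0) b = (False, (2^b * int c) mod int n)"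
          unfolding C2_def using n0 c_le_n by (intro icv_fr) auto
        moreover have "(2^b * int c) mod int n = 0" using nbc by simp
        ultimately show ?thesis using ev by simp
      qed
    next
      case h
      have vu: "\<forall>l\<in>set u. ulet_vars l \<subseteq> {1..k}" using vars h by auto
      have "evalw C2 \<rho> (subst_eq n u) = \<iota> (eval_eq C1 (True,0) (False,1) h' u)"
        by (rule subst_eval[OF grC1 grC2 h\<iota> rho_c s1 t1 \<iota>s \<iota>t hJ vu])
      then show ?thesis using h eq1[OF h(2)] by (simp add: \<iota>_def iota_def)
    qed
  qed
  have rho_X: "\<rho> ` X4 \<subseteq> carrier C2" using rho_c by auto
  have hF: "plift C2 \<rho> \<in> hom (presented_group X4 R4) C2"
    using rel one2 by (intro C2.plift_hom[OF rho_X]) auto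
  define f where "f = PsiD n \<circ> plift C2 \<rho>"
  have hf: "f \<in> hom (G4c n b c k us) (dihedral_pres n)"
  proof -
    have "PsiD n \<in> hom C2 (dihedral_pres n)" unfolding C2_def by (rule PsiD_hom[OF n2])
    then show ?thesis unfolding f_def G4eq by (rule hom_compose[OF hF])
  qed
  have "f ` carrier (G4c n b c k us) = carrier (dihedral_pres n)"
  proof
    show "f ` carrier (G4c n b c k us) \<subseteq> carrier (dihedral_pres n)" using hom_carrier[OF hf] .
    show "carrier (dihedral_pres n) \<subseteq> f ` carrier (G4c n b c k us)"
    proof
      fix x assume x: "x \<in> carrier (dihedral_pres n)"
      obtain e i where ei: "PhiD n x = (e,i)" by force
      have "PhiD n x \<in> carrier C2" using hom_in_carrier[OF PhiD_hom[OF n2] x] by (simp add: C2_def)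
      then have i: "0 \<le> i" "i < int n" using ei by (auto simp: C2_def)
      define w where "w = (if e then [(GA,False)] else []) @ replicate (nat i) (GD,False)"
      have ww: "w \<in> words X4" by (simp add: w_def X4_def GA_in GD_in)
      have "evalw C2 \<rho> w = (if e then (True,0) else (False,0)) \<otimes>\<^bsub>C2\<^esub> (False,1) [^]\<^bsub>C2\<^esub> (nat i)"
        using rho_c D1c by (cases e) (simp_all add: w_def C2.evalw_append C2.evalw_replicate \<rho>_def one2[symmetric])
      also have "\<dots> = (e,i)" using DihC_pow_n[of "nat i"] i by (cases e) (simp_all add: C2_def)
      finally have ev: "evalw C2 \<rho> w = (e,i)" .
      have "plift C2 \<rho> (wclass X4 R4 w) = (e,i)"
        using C2.plift_wclass[OF rho_X _ ww, of R4] rel one2 ev by auto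
      then have "f (wclass X4 R4 w) = x" using ei PsiPhi[OF n2 x] by (simp add: f_def)
      moreover have "wclass X4 R4 w \<in> carrier (G4c n b c k us)" using ww by (simp add: G4eq)
      ultimately show "x \<in> f ` carrier (G4c n b c k us)" by (metis imageI)
    qed
  qed
  then show ?thesis using hf by blast
qed

end

theorem lemma7p18:
  fixes n b c k :: nat and us :: "ulet list list"
  assumes "n = 2 ^ b * c" and "odd c" and "c > 1" and "b > 1"
    and "\<forall>u\<in>set us. \<forall>l\<in>set u. ulet_vars l \<subseteq> {1..k}"
  shows "(\<exists>f. f \<in> hom (G4c n b c k us) (dihedral_pres n) \<and>
              f ` carrier (G4c n b c k us) = carrier (dihedral_pres n))
         \<longleftrightarrow> has_solution_Dn n k us"
proof -
  have L: "G4setup n b c k us" using assms by (simp add: G4setup_def)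
  show ?thesis using G4setup.forward[OF L] G4setup.backward[OF L] by blast
qed

end
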